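(* Let $\mathcal{H}_{1}$, $\mathcal{H}_{2}$ and $\mathcal{G}$ be three pdCGs such that both $\mathcal{H}_{1}$ and $\mathcal{H}_{2}$ are covered by $\mathcal{G}$ in the model inclusion order or, equivalently, such that $\mathcal{P}(\mathcal{H}_{1})$ and $\mathcal{P}(\mathcal{H}_{2})$ are two neighbouring submodels of $\mathcal{P}(\mathcal{G})$. Then, if $\mathcal{H}_{1}$ and $\mathcal{H}_{2}$ are $\preceq_{t}$-incomparable, it holds that $\mathcal{H}_{1}\wedge_{s}\mathcal{H}_{2}=\mathcal{H}_{1}\wedge_{t}\mathcal{H}_{2}$. On the other hand, if $\mathcal{H}_{1}\preceq_{t}\mathcal{H}_{2}$ then $\mathcal{H}_{1}\wedge_{s}\mathcal{H}_{2}=\mathcal{H}_{1}\wedge_{t}\mathcal{H}_{1}^{\prime}$ where, for the edge $(i,j)\in\mathbb E_{\mathcal G}$ involved, $\mathcal{H}_{1}$ and $\mathcal{H}_{1}^{\prime}$ are the two graphs $(V, E_{\mathcal{G}}\setminus\{(i,j)\}, \mathbb{L}_{\mathcal{G}}, \mathbb{E}_{\mathcal{G}} \setminus \{(i,j)\})$ and $(V, E_{\mathcal{G}}\setminus\{\tau(i,j)\}, \mathbb{L}_{\mathcal{G}}, \mathbb{E}_{\mathcal{G}} \setminus \{(i,j)\})$ (one each).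
   Context: Let $V=\{1,\dots,p\}$ and let $\tau$ be a twin-pairing function on $V$, i.e. $\tau(i)\in V$ with $\tau(\tau(i))=i$ and $\tau(i)\neq i$; it is extended to edges by $\tau(i,j)=(\tau(i),\tau(j))$ (endpoints reordered so the smaller comes first) and to sets elementwise. Fix a partition $(L,R)$ of $V$ with $\tau(L)=R$, numbered so that $L=\{1,\dots,q\}$, $R=\{q+1,\dots,p\}$. Let $F_V=\{(i,j): i,j\in V, i<j\}$, $F_L=\{(i,j)\in F_V: i<\tau(j)\}$, $F_R=\{(i,j)\in F_V: i>\tau(j)\}$. A coloured graph $\mathcal G=(\mathcal V,\mathcal E)$ consists of a partition $\mathcal V$ of $V$ into vertex colour classes and a partition $\mathcal E$ of an edge set $E\subseteq F_V$ into edge colour classes. It is a coloured graph for paired data (pdCG) if every colour class is either atomic (a single element) or twin-pairing (of the form $\{i,\tau(i)\}$ or $\{(i,j),\tau(i,j)\}$ with $(i,j)\neq\tau(i,j)$). The associated RCON model for paired data $\mathcal{P}(\mathcal G)$ is the family of Gaussian distributions whose concentration matrix has zero entries for missing edges and equal entries for vertices or edges in the same colour class; $\mathcal{P}$ denotes the family of all pdCGs on $V$. Every pdCG is equivalently represented by the quadruplet $(V,E,\mathbb L,\mathbb E)$ where $E$ is the union of the edge colour classes, $E_L=E\cap F_L$, $E_R=E\cap F_R$, $\mathbb L=\{i\in L:\{i\}\in\mathcal V\}$ and $\mathbb E=\{(i,j)\in E_L\cap\tau(E_R): \{(i,j)\}\in\mathcal E\}$. The model inclusion order is $\mathcal H\preceq_s\mathcal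 G$ iff $\mathcal P(\mathcal H)\subseteq\mathcal P(\mathcal G)$ (iff the edge set of $\mathcal H$ is contained in that of $\mathcal G$ and every vertex, resp. edge, colour class of $\mathcal H$ is a union of vertex, resp. edge, colour classes of $\mathcal G$); $\mathcal H$ is covered by $\mathcal G$ in this order if $\mathcal H\prec_s\mathcal G$ and no $\mathcal F\in\mathcal P$ satisfies $\mathcal H\prec_s\mathcal F\prec_s\mathcal G$; $\wedge_s$ denotes the meet (infimum) in the lattice $\langle\mathcal P,\preceq_s\rangle$. The twin order is $\mathcal H\preceq_t\mathcal G$ iff $E_{\mathcal H}\subseteq E_{\mathcal G}$, $\mathbb L_{\mathcal H}\subseteq\mathbb L_{\mathcal G}$ and $\mathbb E_{\mathcal H}\subseteq\mathbb E_{\mathcal G}$; $\langle\mathcal P,\preceq_t\rangle$ is a lattice whose meet is $\mathcal G\wedge_t\mathcal H=(V,E_{\mathcal G}\cap E_{\mathcal H},\mathbb L_{\mathcal G}\cap\mathbb L_{\mathcal H},\mathbb E_{\mathcal G}\cap\mathbb E_{\mathcal H})$. Two neighbouring submodels $\mathcal H_1,\mathcal H_2$ of $\mathcal G$ satisfy $\mathcal H_1\preceq_t\mathcal H_2$ iff, for some $(i,j)\in\mathbb E_{\mathcal G}$, $\mathcal H_2=(V,E_{\mathcal G},\mathbb L_{\mathcal G},\mathbb E_{\mathcal G}\setminus\{(i,j)\})$ and $\mathcal H_1$ is one of the two graphs named in the claim; otherwise they are $\preceq_t$-incomparable. *)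

theory Defs
  imports "HOL-Library.Disjoint_Sets"
begin

(* Vertices are 1..p (naturals), edges are pairs (i,j) with i<j. *)

type_synonym vertex = nat
type_synonym edge = "nat \<times> nat"

(* A coloured graph: (vertex colour classes, edge colour classes). *)
type_synonym cgraph = "vertex set set \<times> edge set set"

definition Vset :: "nat \<Rightarrow> nat set" where
  "Vset p = {1..p}"

definition twin_pairing :: "nat \<Rightarrow> (nat \<Rightarrow> nat) \<Rightarrow> bool" where
  "twin_pairing p \<tau> \<longleftrightarrow>
     (\<forall>i\<in>Vset p. \<tau> i \<in> Vset p \<and> \<tau> (\<tau> i) = i \<and> \<tau> i \<noteq> i)"

definition tau_e :: "(nat \<Rightarrow> nat) \<Rightarrow> edge \<Rightarrow> edge" where
  "tau_e \<tau> e = (min (\<tau> (fst e)) (\<tau> (snd e)), max (\<tau> (fst e)) (\<tau> (snd e)))"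

definition FV :: "nat \<Rightarrow> edge set" where
  "FV p = {(i,j). i \<in> Vset p \<and> j \<in> Vset p \<and> i < j}"

definition FL :: "nat \<Rightarrow> (nat \<Rightarrow> nat) \<Rightarrow> edge set" where
  "FL p \<tau> = {(i,j) \<in> FV p. i < \<tau> j}"

definition FR :: "nat \<Rightarrow> (nat \<Rightarrow> nat) \<Rightarrow> edge set" where
  "FR p \<tau> = {(i,j) \<in> FV p. i > \<tau> j}"

definition vclasses :: "cgraph \<Rightarrow> vertex set set" where
  "vclasses G = fst G"

definition eclasses :: "cgraph \<Rightarrow> edge set set" where
  "eclasses G = snd G"

definition edges :: "cgraph \<Rightarrow> edge set" where
  "edges G = \<Union> (eclasses G)"

definition atomic :: "'a set \<Rightarrow> bool" where
  "atomic X \<longleftrightarrow> (\<exists>x. X = {x})"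

definition twin_vclass :: "(nat \<Rightarrow> nat) \<Rightarrow> vertex set \<Rightarrow> bool" where
  "twin_vclass \<tau> X \<longleftrightarrow> (\<exists>i. X = {i, \<tau> i})"

definition twin_eclass :: "(nat \<Rightarrow> nat) \<Rightarrow> edge set \<Rightarrow> bool" where
  "twin_eclass \<tau> X \<longleftrightarrow> (\<exists>e. X = {e, tau_e \<tau> e} \<and> e \<noteq> tau_e \<tau> e)"

definition is_pdCG :: "nat \<Rightarrow> (nat \<Rightarrow> nat) \<Rightarrow> cgraph \<Rightarrow> bool" where
  "is_pdCG p \<tau> G \<longleftrightarrow>
     partition_on (Vset p) (vclasses G) \<and>
     edges G \<subseteq> FV p \<and>
     partition_on (edges G) (eclasses G) \<and>
     (\<forall>X\<in>vclasses G. atomic X \<or> twin_vclass \<tau> X) \<and>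
     (\<forall>X\<in>eclasses G. atomic X \<or> twin_eclass \<tau> X)"

(* quadruplet representation (V is fixed, so we record (E, LL, EE)) *)
definition Lbb :: "nat \<Rightarrow> cgraph \<Rightarrow> vertex set" where
  "Lbb q G = {i \<in> {1..q}. {i} \<in> vclasses G}"

definition Ebb :: "nat \<Rightarrow> (nat \<Rightarrow> nat) \<Rightarrow> cgraph \<Rightarrow> edge set" where
  "Ebb p \<tau> G = {e \<in> (edges G \<inter> FL p \<tau>) \<inter> tau_e \<tau> ` (edges G \<inter> FR p \<tau>). {e} \<in> eclasses G}"

definition quad :: "nat \<Rightarrow> nat \<Rightarrow> (nat \<Rightarrow> nat) \<Rightarrow> cgraph \<Rightarrow> edge set \<times> vertex set \<times> edge set" where
  "quad p q \<tau> G = (edges G, Lbb q G, Ebb p \<tau> G)"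

(* model inclusion order (combinatorial characterisation of P(H) \<subseteq> P(G)) *)
definition sub_s :: "cgraph \<Rightarrow> cgraph \<Rightarrow> bool" where
  "sub_s H G \<longleftrightarrow>
     edges H \<subseteq> edges G \<and>
     (\<forall>X\<in>vclasses H. \<exists>S\<subseteq>vclasses G. X = \<Union>S) \<and>
     (\<forall>X\<in>eclasses H. \<exists>S\<subseteq>eclasses G. X = \<Union>S)"

definition covered_s :: "nat \<Rightarrow> (nat \<Rightarrow> nat) \<Rightarrow> cgraph \<Rightarrow> cgraph \<Rightarrow> bool" where
  "covered_s p \<tau> H G \<longleftrightarrow>
     sub_s H G \<and> H \<noteq> G \<and>
     \<not> (\<exists>F. is_pdCG p \<tau> F \<and> sub_s H F \<and> H \<noteq> F \<and> sub_s F G \<and> F \<noteq> G)"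

definition meet_s :: "nat \<Rightarrow> (nat \<Rightarrow> nat) \<Rightarrow> cgraph \<Rightarrow> cgraph \<Rightarrow> cgraph" where
  "meet_s p \<tau> H1 H2 = (THE M. is_pdCG p \<tau> M \<and> sub_s M H1 \<and> sub_s M H2 \<and>
       (\<forall>F. is_pdCG p \<tau> F \<and> sub_s F H1 \<and> sub_s F H2 \<longrightarrow> sub_s F M))"

definition sub_t :: "nat \<Rightarrow> nat \<Rightarrow> (nat \<Rightarrow> nat) \<Rightarrow> cgraph \<Rightarrow> cgraph \<Rightarrow> bool" where
  "sub_t p q \<tau> H G \<longleftrightarrow>
     edges H \<subseteq> edges G \<and> Lbb q H \<subseteq> Lbb q G \<and> Ebb p \<tau> H \<subseteq> Ebb p \<tau> G"

definition qmeet :: "edge set \<times> vertex set \<times> edge set \<Rightarrow> edge set \<times> vertex set \<times> edge set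
                     \<Rightarrow> edge set \<times> vertex set \<times> edge set" where
  "qmeet A B = (fst A \<inter> fst B, fst (snd A) \<inter> fst (snd B), snd (snd A) \<inter> snd (snd B))"

definition meet_t :: "nat \<Rightarrow> nat \<Rightarrow> (nat \<Rightarrow> nat) \<Rightarrow> cgraph \<Rightarrow> cgraph \<Rightarrow> edge set \<times> vertex set \<times> edge set" where
  "meet_t p q \<tau> G H = qmeet (quad p q \<tau> G) (quad p q \<tau> H)"

end

theory Submission
  imports Defs
begin


definition cls :: "'a set set \<Rightarrow> 'a \<Rightarrow> 'a set" where
  "cls P x = (THE Y. Y \<in> P \<and> x \<in> Y)"

lemma part_uniq:
  assumes "partition_on A P" "X \<in> P" "Y \<in> P" "x \<in> X" "x \<in> Y"
  shows "X = Y"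
  using assms unfolding partition_on_def disjoint_def disjnt_def by blast

lemma cls_eq:
  assumes "partition_on A P" "Y \<in> P" "x \<in> Y"
  shows "cls P x = Y"
  unfolding cls_def
proof (rule the_equality)
  show "Y \<in> P \<and> x \<in> Y" using assms(2,3) by blast
  fix Z assume "Z \<in> P \<and> x \<in> Z"
  then show "Z = Y" using part_uniq[OF assms(1)] assms(2,3) by blast
qed

lemma cls_in:
  assumes "partition_on A P" "x \<in> A"
  shows "cls P x \<in> P \<and> x \<in> cls P x"
proof -
  obtain Y where "Y \<in> P" "x \<in> Y" using assms partition_onD1 by blast
  thus ?thesis using cls_eq[OF assms(1)] by simp
qed

lemma cls_sub:
  assumes "partition_on A P" "x \<in> A"
  shows "cls P x \<subseteq> A"
  using cls_in[OF assms] assms(1) partition_onD1 by blast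

lemma part_img:
  assumes "partition_on A P"
  shows "P = cls P ` A"
proof
  show "P \<subseteq> cls P ` A"
  proof
    fix Y assume Y: "Y \<in> P"
    have "Y \<noteq> {}" using Y assms partition_onD3 by blast
    then obtain x where "x \<in> Y" by blast
    then have "cls P x = Y" "x \<in> A" using cls_eq[OF assms Y] Y assms partition_onD1 by blast+
    then show "Y \<in> cls P ` A" by force
  qed
  show "cls P ` A \<subseteq> P" using cls_in[OF assms] by blast
qed

lemma classfun_part:
  assumes "\<And>x. x \<in> A \<Longrightarrow> x \<in> c x" "\<And>x. x \<in> A \<Longrightarrow> c x \<subseteq> A"
    "\<And>x y. x \<in> A \<Longrightarrow> y \<in> c x \<Longrightarrow> c y = c x"
  shows "partition_on A (c ` A)"
proof (rule partition_onI)
  show "\<Union> (c ` A) = A" using assms(1,2) by blast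
  show "{} \<notin> c ` A" using assms(1) by blast
  fix X Y assume "X \<in> c ` A" "Y \<in> c ` A" "X \<noteq> Y"
  then obtain x y where "x \<in> A" "y \<in> A" "X = c x" "Y = c y" by blast
  show "disjnt X Y" unfolding disjnt_def
  proof (rule ccontr)
    assume "X \<inter> Y \<noteq> {}"
    then obtain z where z: "z \<in> X" "z \<in> Y" by blast
    have "c z = c x" using assms(3) \<open>x \<in> A\<close> z(1) \<open>X = c x\<close> by blast
    moreover have "c z = c y" using assms(3) \<open>y \<in> A\<close> z(2) \<open>Y = c y\<close> by blast
    ultimately show False using \<open>X \<noteq> Y\<close> \<open>X = c x\<close> \<open>Y = c y\<close> by simp
  qed
qed

lemma classfun_cls:
  assumes "\<And>x. x \<in> A \<Longrightarrow> x \<in> c x" "\<And>x. x \<in> A \<Longrightarrow> c x \<subseteq> A"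
    "\<And>x y. x \<in> A \<Longrightarrow> y \<in> c x \<Longrightarrow> c y = c x" "x \<in> A"
  shows "cls (c ` A) x = c x"
  using cls_eq[OF classfun_part[OF assms(1-3)]] assms(1,4) by blast

lemma union_classes:
  assumes "partition_on A1 P1" "partition_on A2 P2" "A1 \<subseteq> A2"
  shows "(\<forall>X\<in>P1. \<exists>S\<subseteq>P2. X = \<Union>S) \<longleftrightarrow> (\<forall>x\<in>A1. cls P2 x \<subseteq> cls P1 x)"
proof
  assume H: "\<forall>X\<in>P1. \<exists>S\<subseteq>P2. X = \<Union>S"
  show "\<forall>x\<in>A1. cls P2 x \<subseteq> cls P1 x"
  proof
    fix x assume x: "x \<in> A1"
    have c1: "cls P1 x \<in> P1" "x \<in> cls P1 x" using cls_in[OF assms(1) x] by auto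
    then obtain S where S: "S \<subseteq> P2" "cls P1 x = \<Union>S" using H by blast
    then obtain Y where "Y \<in> S" "x \<in> Y" using c1 by blast
    then have "cls P2 x = Y" using cls_eq[OF assms(2)] S by blast
    then show "cls P2 x \<subseteq> cls P1 x" using S \<open>Y \<in> S\<close> by blast
  qed
next
  assume H: "\<forall>x\<in>A1. cls P2 x \<subseteq> cls P1 x"
  show "\<forall>X\<in>P1. \<exists>S\<subseteq>P2. X = \<Union>S"
  proof
    fix X assume X: "X \<in> P1"
    have XA: "X \<subseteq> A1" using X assms(1) partition_onD1 by blast
    let ?S = "{Y \<in> P2. Y \<subseteq> X}"
    have "X \<subseteq> \<Union>?S"
    proof
      fix x assume x: "x \<in> X"
      then have "x \<in> A1" "x \<in> A2" using XA assms(3) by blast+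
      then have "cls P2 x \<in> P2" "x \<in> cls P2 x" "cls P2 x \<subseteq> cls P1 x"
        using cls_in[OF assms(2)] H by blast+
      moreover have "cls P1 x = X" using cls_eq[OF assms(1) X x] .
      ultimately show "x \<in> \<Union>?S" by blast
    qed
    then show "\<exists>S\<subseteq>P2. X = \<Union>S" by (intro exI[of _ ?S]) blast
  qed
qed


locale pdset =
  fixes p q :: nat and \<tau> :: "nat \<Rightarrow> nat"
  assumes tp: "twin_pairing p \<tau>" and qp: "q \<le> p" and LR: "\<tau> ` {1..q} = {q+1..p}"
begin

abbreviation T where "T \<equiv> tau_e \<tau>"
abbreviation V where "V \<equiv> Vset p"

lemma V_iff: "i \<in> V \<longleftrightarrow> 1 \<le> i \<and> i \<le> p" by (simp add: Vset_def)

lemma tV: "i \<in> V \<Longrightarrow> \<tau> i \<in> V" using tp unfolding twin_pairing_def by blast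
lemma tt: "i \<in> V \<Longrightarrow> \<tau> (\<tau> i) = i" using tp unfolding twin_pairing_def by blast
lemma tneq: "i \<in> V \<Longrightarrow> \<tau> i \<noteq> i" using tp unfolding twin_pairing_def by blast
lemma tinj: "i \<in> V \<Longrightarrow> j \<in> V \<Longrightarrow> \<tau> i = \<tau> j \<Longrightarrow> i = j" by (metis tt)

lemma side: assumes "i \<in> V" shows "i \<le> q \<longleftrightarrow> q < \<tau> i"
proof
  assume "i \<le> q"
  then have "i \<in> {1..q}" using assms V_iff by auto
  then have "\<tau> i \<in> {q+1..p}" using LR by blast
  then show "q < \<tau> i" by auto
next
  assume a: "q < \<tau> i"
  show "i \<le> q"
  proof (rule ccontr)
    assume "\<not> i \<le> q"
    then have "i \<in> {q+1..p}" using assms V_iff by auto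
    then obtain k where k: "k \<in> {1..q}" "i = \<tau> k" using LR by (metis imageE)
    then have "k \<in> V" using qp V_iff by auto
    then have "\<tau> i = k" using k tt by simp
    then show False using a k by auto
  qed
qed

lemma FV_iff: "(i,j) \<in> FV p \<longleftrightarrow> i \<in> V \<and> j \<in> V \<and> i < j" by (simp add: FV_def)
lemma FL_iff: "(i,j) \<in> FL p \<tau> \<longleftrightarrow> (i,j) \<in> FV p \<and> i < \<tau> j" by (simp add: FL_def)
lemma FR_iff: "(i,j) \<in> FR p \<tau> \<longleftrightarrow> (i,j) \<in> FV p \<and> i > \<tau> j" by (simp add: FR_def)
lemma T_simp: "T (i,j) = (min (\<tau> i) (\<tau> j), max (\<tau> i) (\<tau> j))" by (simp add: tau_e_def)

lemma T_FV: assumes "e \<in> FV p" shows "T e \<in> FV p"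
proof -
  obtain i j where e: "e = (i,j)" by fastforce
  have "i \<in> V" "j \<in> V" "i < j" using assms e FV_iff by auto
  moreover have "\<tau> i \<noteq> \<tau> j" using calculation tinj by fastforce
  ultimately show ?thesis using e T_simp FV_iff tV by (auto simp: min_def max_def)
qed

lemma TT: assumes "e \<in> FV p" shows "T (T e) = e"
proof -
  obtain i j where e: "e = (i,j)" by fastforce
  have *: "i \<in> V" "j \<in> V" "i < j" using assms e FV_iff by auto
  show ?thesis
  proof (cases "\<tau> i < \<tau> j")
    case True then show ?thesis using e * T_simp tt by (auto simp: min_def max_def)
  next
    case False then show ?thesis using e * T_simp tt by (auto simp: min_def max_def)
  qed
qed

lemma FL_FV: "e \<in> FL p \<tau> \<Longrightarrow> e \<in> FV p" by (auto simp: FL_def)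
lemma FR_FV: "e \<in> FR p \<tau> \<Longrightarrow> e \<in> FV p" by (auto simp: FR_def)
lemma FL_FR_disj: "e \<in> FL p \<tau> \<Longrightarrow> e \<notin> FR p \<tau>" by (auto simp: FL_def FR_def)

lemma FL_T: assumes "e \<in> FV p" shows "T e \<in> FR p \<tau> \<longleftrightarrow> e \<in> FL p \<tau>"
proof -
  obtain i j where e: "e = (i,j)" by fastforce
  have *: "i \<in> V" "j \<in> V" "i < j" using assms e FV_iff by auto
  have s: "i \<le> q \<longleftrightarrow> q < \<tau> i" "j \<le> q \<longleftrightarrow> q < \<tau> j" using side * by auto
  have tt2: "\<tau> (\<tau> i) = i" "\<tau> (\<tau> j) = j" using tt * by auto
  have TF: "T e \<in> FV p" using T_FV assms .
  show ?thesis
  proof (cases "\<tau> i < \<tau> j")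
    case True
    then have "T e = (\<tau> i, \<tau> j)" using e T_simp by auto
    then show ?thesis using TF e True s tt2 * assms FR_iff FL_iff by auto
  next
    case False
    then have "T e = (\<tau> j, \<tau> i)" using e T_simp by (auto simp: min_def max_def)
    then show ?thesis using TF e False s tt2 * assms FR_iff FL_iff by auto
  qed
qed

lemma FL_to_FR: "e \<in> FL p \<tau> \<Longrightarrow> T e \<in> FR p \<tau>" using FL_T FL_FV by blast
lemma FR_to_FL: "e \<in> FR p \<tau> \<Longrightarrow> T e \<in> FL p \<tau>"
  using FL_T[of "T e"] FR_FV T_FV TT by metis
lemma FL_neq: "e \<in> FL p \<tau> \<Longrightarrow> T e \<noteq> e" using FL_to_FR FL_FR_disj by metis
lemma FR_neq: "e \<in> FR p \<tau> \<Longrightarrow> T e \<noteq> e" using FR_to_FL FL_FR_disj by metis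

lemma trich: assumes "e \<in> FV p" shows "e \<in> FL p \<tau> \<or> e \<in> FR p \<tau> \<or> T e = e"
proof -
  obtain i j where e: "e = (i,j)" by fastforce
  have *: "i \<in> V" "j \<in> V" "i < j" using assms e FV_iff by auto
  show ?thesis
  proof (cases "i = \<tau> j")
    case True
    then have "\<tau> i = j" using tt * by auto
    then show ?thesis using True e T_simp * by (auto simp: min_def max_def)
  next
    case False
    then show ?thesis using e assms FL_iff FR_iff by auto
  qed
qed

end


context pdset
begin

definition vf :: "nat set \<Rightarrow> nat \<Rightarrow> nat set" where
  "vf L i = (if i \<in> L \<or> \<tau> i \<in> L then {i} else {i, \<tau> i})"

definition ef :: "edge set \<Rightarrow> edge set \<Rightarrow> edge \<Rightarrow> edge set" where
  "ef E B e = (if T e \<notin> E \<or> T e = e \<or> e \<in> B \<or> T e \<in> B then {e} else {e, T e})"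

definition mk :: "edge set \<Rightarrow> nat set \<Rightarrow> edge set \<Rightarrow> cgraph" where
  "mk E L B = (vf L ` V, ef E B ` E)"

definition valid :: "edge set \<Rightarrow> nat set \<Rightarrow> edge set \<Rightarrow> bool" where
  "valid E L B \<longleftrightarrow> E \<subseteq> FV p \<and> L \<subseteq> {1..q} \<and> B \<subseteq> E \<inter> FL p \<tau> \<and> (\<forall>e\<in>B. T e \<in> E)"

lemma vf1: "i \<in> V \<Longrightarrow> i \<in> vf L i" by (simp add: vf_def)
lemma vf2: "i \<in> V \<Longrightarrow> vf L i \<subseteq> V" using tV by (simp add: vf_def)
lemma vf3: assumes "i \<in> V" "j \<in> vf L i" shows "vf L j = vf L i"
proof (cases "i \<in> L \<or> \<tau> i \<in> L")
  case True then show ?thesis using assms by (simp add: vf_def)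
next
  case False
  then have "j = i \<or> j = \<tau> i" using assms by (simp add: vf_def)
  moreover have "vf L (\<tau> i) = vf L i" using False tt[OF assms(1)] by (auto simp add: vf_def)
  ultimately show ?thesis by blast
qed

lemma ef1: "e \<in> E \<Longrightarrow> e \<in> ef E B e" by (simp add: ef_def)
lemma ef2: "e \<in> E \<Longrightarrow> ef E B e \<subseteq> E" by (simp add: ef_def)
lemma ef3: assumes "E \<subseteq> FV p" "e \<in> E" "f \<in> ef E B e" shows "ef E B f = ef E B e"
proof (cases "T e \<notin> E \<or> T e = e \<or> e \<in> B \<or> T e \<in> B")
  case True then show ?thesis using assms by (simp add: ef_def)
next
  case False
  then have "f = e \<or> f = T e" using assms by (simp add: ef_def)
  moreover have "T (T e) = e" using TT assms by blast
  then have "ef E B (T e) = ef E B e" using False assms by (auto simp add: ef_def)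
  ultimately show ?thesis by blast
qed

lemma mk_vpart: "partition_on V (vclasses (mk E L B))"
  using classfun_part[of V "vf L", OF vf1 vf2 vf3] by (simp add: mk_def vclasses_def)
lemma mk_vcls: "i \<in> V \<Longrightarrow> cls (vclasses (mk E L B)) i = vf L i"
  using classfun_cls[of V "vf L", OF vf1 vf2 vf3] by (simp add: mk_def vclasses_def)
lemma mk_edges: "edges (mk E L B) = E"
  unfolding mk_def edges_def eclasses_def using ef1 ef2 by (simp; blast)
lemma mk_epart: "E \<subseteq> FV p \<Longrightarrow> partition_on E (eclasses (mk E L B))"
  using classfun_part[of E "ef E B", OF ef1 ef2 ef3] by (simp add: mk_def eclasses_def)
lemma mk_ecls: "E \<subseteq> FV p \<Longrightarrow> e \<in> E \<Longrightarrow> cls (eclasses (mk E L B)) e = ef E B e"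
  using classfun_cls[of E "ef E B", OF ef1 ef2 ef3] by (simp add: mk_def eclasses_def)

lemma mk_pd: assumes "valid E L B" shows "is_pdCG p \<tau> (mk E L B)"
  unfolding is_pdCG_def
proof (intro conjI)
  show "partition_on V (vclasses (mk E L B))" by (rule mk_vpart)
  show "edges (mk E L B) \<subseteq> FV p" using assms mk_edges valid_def by simp
  show "partition_on (edges (mk E L B)) (eclasses (mk E L B))"
    using mk_epart assms mk_edges valid_def by simp
  show "\<forall>X\<in>vclasses (mk E L B). atomic X \<or> twin_vclass \<tau> X"
    unfolding mk_def vclasses_def atomic_def twin_vclass_def vf_def by auto
  show "\<forall>X\<in>eclasses (mk E L B). atomic X \<or> twin_eclass \<tau> X"
  proof
    fix X assume "X \<in> eclasses (mk E L B)"
    then obtain e where e: "X = ef E B e" unfolding mk_def eclasses_def by auto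
    show "atomic X \<or> twin_eclass \<tau> X"
    proof (cases "T e \<notin> E \<or> T e = e \<or> e \<in> B \<or> T e \<in> B")
      case True then show ?thesis using e by (simp add: ef_def atomic_def)
    next
      case False
      then have "X = {e, T e} \<and> e \<noteq> T e" using e by (auto simp add: ef_def)
      then show ?thesis unfolding twin_eclass_def by blast
    qed
  qed
qed

lemma mk_Lbb: assumes "valid E L B" shows "Lbb q (mk E L B) = L"
proof -
  have L: "L \<subseteq> {1..q}" using assms valid_def by auto
  have "{i} \<in> vclasses (mk E L B) \<longleftrightarrow> i \<in> V \<and> (i \<in> L \<or> \<tau> i \<in> L)" for i
  proof
    assume "{i} \<in> vclasses (mk E L B)"
    then obtain j where j: "j \<in> V" "{i} = vf L j" unfolding mk_def vclasses_def by auto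
    then have iV: "i \<in> V" using vf2 by blast
    have "vf L i = vf L j" using vf3 j by auto
    then have "vf L i = {i}" using j by simp
    then show "i \<in> V \<and> (i \<in> L \<or> \<tau> i \<in> L)" using iV tneq unfolding vf_def
      by (auto split: if_splits)
  next
    assume "i \<in> V \<and> (i \<in> L \<or> \<tau> i \<in> L)"
    then show "{i} \<in> vclasses (mk E L B)" unfolding mk_def vclasses_def vf_def
      by (auto intro!: image_eqI[of _ _ i])
  qed
  moreover have "i \<in> {1..q} \<Longrightarrow> \<tau> i \<notin> L" for i
    using L side[of i] qp V_iff by fastforce
  ultimately show ?thesis unfolding Lbb_def using L qp V_iff by fastforce
qed

lemma mk_Ebb: assumes "valid E L B" shows "Ebb p \<tau> (mk E L B) = B"
proof -
  have v: "E \<subseteq> FV p" "B \<subseteq> E \<inter> FL p \<tau>" "\<forall>e\<in>B. T e \<in> E" using assms valid_def by auto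
  have sing: "{e} \<in> eclasses (mk E L B) \<longleftrightarrow> e \<in> E \<and> (T e \<notin> E \<or> T e = e \<or> e \<in> B \<or> T e \<in> B)" for e
  proof
    assume "{e} \<in> eclasses (mk E L B)"
    then obtain f where f: "f \<in> E" "{e} = ef E B f" unfolding mk_def eclasses_def by auto
    then have eE: "e \<in> E" using ef2 by blast
    have "ef E B e = ef E B f" using ef3[OF v(1) f(1), of e B] f(2) by (metis insertI1)
    then have "ef E B e = {e}" using f by simp
    then show "e \<in> E \<and> (T e \<notin> E \<or> T e = e \<or> e \<in> B \<or> T e \<in> B)" using eE unfolding ef_def
      by (auto split: if_splits)
  next
    assume "e \<in> E \<and> (T e \<notin> E \<or> T e = e \<or> e \<in> B \<or> T e \<in> B)"
    then show "{e} \<in> eclasses (mk E L B)" unfolding mk_def eclasses_def ef_def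
      by (auto intro!: image_eqI[of _ _ e])
  qed
  show ?thesis
  proof
    show "Ebb p \<tau> (mk E L B) \<subseteq> B"
    proof
      fix e assume "e \<in> Ebb p \<tau> (mk E L B)"
      then have e: "e \<in> E" "e \<in> FL p \<tau>" "e \<in> T ` (E \<inter> FR p \<tau>)" "{e} \<in> eclasses (mk E L B)"
        unfolding Ebb_def mk_edges by auto
      then obtain f where f: "f \<in> E" "f \<in> FR p \<tau>" "e = T f" by blast
      then have "T e = f" using TT FR_FV by blast
      then show "e \<in> B" using sing e f FL_neq FL_FR_disj v by blast
    qed
    show "B \<subseteq> Ebb p \<tau> (mk E L B)"
    proof
      fix e assume eB: "e \<in> B"
      then have e: "e \<in> E" "e \<in> FL p \<tau>" "T e \<in> E" using v by auto
      then have "T e \<in> FR p \<tau>" "T (T e) = e" using FL_to_FR TT FL_FV by auto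
      then have "e \<in> T ` (E \<inter> FR p \<tau>)" using e by (metis IntI imageI)
      then show "e \<in> Ebb p \<tau> (mk E L B)" unfolding Ebb_def mk_edges using e sing eB by auto
    qed
  qed
qed

lemma mk_quad: "valid E L B \<Longrightarrow> quad p q \<tau> (mk E L B) = (E, L, B)"
  using mk_Lbb mk_Ebb mk_edges by (simp add: quad_def)

end


context pdset
begin

lemma pd_vpart: "is_pdCG p \<tau> G \<Longrightarrow> partition_on V (vclasses G)" by (simp add: is_pdCG_def)
lemma pd_epart: "is_pdCG p \<tau> G \<Longrightarrow> partition_on (edges G) (eclasses G)" by (simp add: is_pdCG_def)
lemma pd_EFV: "is_pdCG p \<tau> G \<Longrightarrow> edges G \<subseteq> FV p" by (simp add: is_pdCG_def)

lemma pd_vclass: assumes "is_pdCG p \<tau> G" "X \<in> vclasses G" "x \<in> X"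
  shows "X = {x} \<or> (X = {x, \<tau> x} \<and> \<tau> x \<noteq> x)"
proof -
  have XV: "X \<subseteq> V" using assms pd_vpart partition_onD1 by blast
  have "atomic X \<or> twin_vclass \<tau> X" using assms unfolding is_pdCG_def by blast
  then show ?thesis
  proof
    assume "atomic X" then show ?thesis using assms(3) unfolding atomic_def by auto
  next
    assume "twin_vclass \<tau> X"
    then obtain j where j: "X = {j, \<tau> j}" unfolding twin_vclass_def by blast
    then have "j \<in> V" using XV by auto
    then show ?thesis using j assms(3) tt tneq tV by auto
  qed
qed

lemma pd_eclass: assumes "is_pdCG p \<tau> G" "X \<in> eclasses G" "x \<in> X"
  shows "X = {x} \<or> (X = {x, T x} \<and> T x \<noteq> x)"
proof -
  have XE: "X \<subseteq> edges G" using assms pd_epart partition_onD1 by blast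
  have "atomic X \<or> twin_eclass \<tau> X" using assms unfolding is_pdCG_def by blast
  then show ?thesis
  proof
    assume "atomic X" then show ?thesis using assms(3) unfolding atomic_def by auto
  next
    assume "twin_eclass \<tau> X"
    then obtain f where f: "X = {f, T f}" "f \<noteq> T f" unfolding twin_eclass_def by blast
    then have "f \<in> FV p" using XE pd_EFV[OF assms(1)] by auto
    then have "T (T f) = f" using TT by blast
    then show ?thesis using f assms(3) by auto
  qed
qed

lemma pd_vsing1: assumes "is_pdCG p \<tau> G" "i \<in> V" "{i} \<in> vclasses G"
  shows "{\<tau> i} \<in> vclasses G"
proof -
  have P: "partition_on V (vclasses G)" using pd_vpart assms(1) .
  let ?X = "cls (vclasses G) (\<tau> i)"
  have X: "?X \<in> vclasses G" "\<tau> i \<in> ?X" using cls_in[OF P] tV assms(2) by auto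
  from pd_vclass[OF assms(1) X] show ?thesis
  proof
    assume "?X = {\<tau> i}" then show ?thesis using X by simp
  next
    assume a: "?X = {\<tau> i, \<tau> (\<tau> i)} \<and> \<tau> (\<tau> i) \<noteq> \<tau> i"
    then have "i \<in> ?X" using tt assms(2) by auto
    then have "?X = {i}" using part_uniq[OF P X(1) assms(3)] by blast
    then show ?thesis using X tneq assms(2) by auto
  qed
qed

lemma pd_vsing: assumes "is_pdCG p \<tau> G" "i \<in> V"
  shows "{\<tau> i} \<in> vclasses G \<longleftrightarrow> {i} \<in> vclasses G"
  using pd_vsing1[OF assms] pd_vsing1[OF assms(1) tV[OF assms(2)]] tt[OF assms(2)] by auto

lemma pd_Lbb_iff: assumes "is_pdCG p \<tau> G" "i \<in> V"
  shows "(i \<in> Lbb q G \<or> \<tau> i \<in> Lbb q G) \<longleftrightarrow> {i} \<in> vclasses G"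
proof (cases "i \<le> q")
  case True
  then have "q < \<tau> i" using side assms(2) by blast
  then have "\<tau> i \<notin> Lbb q G" unfolding Lbb_def by simp
  moreover have "i \<in> {1..q}" using True assms(2) V_iff by simp
  ultimately show ?thesis unfolding Lbb_def by blast
next
  case False
  then have a: "\<tau> i \<le> q" using side[OF tV[OF assms(2)]] tt[OF assms(2)] by simp
  have "\<tau> i \<in> V" using tV[OF assms(2)] .
  then have "\<tau> i \<in> {1..q}" using a V_iff by simp
  moreover have "i \<notin> Lbb q G" using False unfolding Lbb_def by simp
  ultimately show ?thesis using pd_vsing[OF assms] unfolding Lbb_def by blast
qed

lemma pd_vcls: assumes "is_pdCG p \<tau> G" "i \<in> V"
  shows "cls (vclasses G) i = vf (Lbb q G) i"
proof -
  have P: "partition_on V (vclasses G)" using pd_vpart assms(1) .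
  let ?X = "cls (vclasses G) i"
  have X: "?X \<in> vclasses G" "i \<in> ?X" using cls_in[OF P] assms(2) by auto
  show ?thesis
  proof (cases "{i} \<in> vclasses G")
    case True
    then have "?X = {i}" using cls_eq[OF P True] by simp
    moreover have "i \<in> Lbb q G \<or> \<tau> i \<in> Lbb q G" using True pd_Lbb_iff[OF assms] by blast
    ultimately show ?thesis unfolding vf_def by simp
  next
    case False
    have "?X \<noteq> {i}" using False X(1) by metis
    then have "?X = {i, \<tau> i}" using pd_vclass[OF assms(1) X] by blast
    moreover have "\<not> (i \<in> Lbb q G \<or> \<tau> i \<in> Lbb q G)" using False pd_Lbb_iff[OF assms] by blast
    ultimately show ?thesis unfolding vf_def by simp
  qed
qed

lemma pd_esing: assumes "is_pdCG p \<tau> G" "e \<in> edges G"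
  shows "{e} \<in> eclasses G \<longleftrightarrow>
     (T e \<notin> edges G \<or> T e = e \<or> e \<in> Ebb p \<tau> G \<or> T e \<in> Ebb p \<tau> G)"
proof -
  have P: "partition_on (edges G) (eclasses G)" using pd_epart assms(1) .
  have EF: "edges G \<subseteq> FV p" using pd_EFV assms(1) .
  have eF: "e \<in> FV p" using EF assms(2) by blast
  let ?X = "cls (eclasses G) e"
  have X: "?X \<in> eclasses G" "e \<in> ?X" using cls_in[OF P] assms(2) by auto
  have XE: "?X \<subseteq> edges G" using cls_sub[OF P assms(2)] .
  show ?thesis
  proof
    assume s: "{e} \<in> eclasses G"
    show "T e \<notin> edges G \<or> T e = e \<or> e \<in> Ebb p \<tau> G \<or> T e \<in> Ebb p \<tau> G"
    proof (rule ccontr)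
      assume "\<not> ?thesis"
      then have n: "T e \<in> edges G" "T e \<noteq> e" "e \<notin> Ebb p \<tau> G" "T e \<notin> Ebb p \<tau> G" by auto
      have tte: "T (T e) = e" using TT eF by blast
      from trich[OF eF] n(2) have "e \<in> FL p \<tau> \<or> e \<in> FR p \<tau>" by blast
      then show False
      proof
        assume eL: "e \<in> FL p \<tau>"
        then have "T e \<in> FR p \<tau>" using FL_to_FR by blast
        then have "e \<in> T ` (edges G \<inter> FR p \<tau>)" using n(1) tte by (metis IntI imageI)
        then have "e \<in> Ebb p \<tau> G" unfolding Ebb_def using eL assms(2) s by blast
        then show False using n by blast
      next
        assume eR: "e \<in> FR p \<tau>"
        then have TL: "T e \<in> FL p \<tau>" using FR_to_FL by blast
        have "T e \<in> T ` (edges G \<inter> FR p \<tau>)" using eR assms(2) by blast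
        moreover have "{T e} \<in> eclasses G"
        proof -
          let ?Y = "cls (eclasses G) (T e)"
          have Y: "?Y \<in> eclasses G" "T e \<in> ?Y" using cls_in[OF P n(1)] by auto
          from pd_eclass[OF assms(1) Y] show ?thesis
          proof
            assume "?Y = {T e}" then show ?thesis using Y by simp
          next
            assume "?Y = {T e, T (T e)} \<and> T (T e) \<noteq> T e"
            then have "e \<in> ?Y" using tte by auto
            then have "?Y = {e}" using part_uniq[OF P Y(1) s] by blast
            then show ?thesis using Y n by auto
          qed
        qed
        ultimately have "T e \<in> Ebb p \<tau> G" unfolding Ebb_def using TL n(1) by blast
        then show False using n by blast
      qed
    qed
  next
    assume c: "T e \<notin> edges G \<or> T e = e \<or> e \<in> Ebb p \<tau> G \<or> T e \<in> Ebb p \<tau> G"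
    from pd_eclass[OF assms(1) X] show "{e} \<in> eclasses G"
    proof
      assume "?X = {e}" then show ?thesis using X by simp
    next
      assume tw: "?X = {e, T e} \<and> T e \<noteq> e"
      have "T e \<in> edges G" using tw XE by auto
      moreover have "e \<notin> Ebb p \<tau> G"
      proof
        assume "e \<in> Ebb p \<tau> G"
        then have "{e} \<in> eclasses G" unfolding Ebb_def by blast
        then have "?X = {e}" using part_uniq[OF P X(1) _ X(2)] by blast
        then show False using tw by auto
      qed
      moreover have "T e \<notin> Ebb p \<tau> G"
      proof
        assume "T e \<in> Ebb p \<tau> G"
        then have "{T e} \<in> eclasses G" unfolding Ebb_def by blast
        then have "?X = {T e}" using part_uniq[OF P X(1), of "{T e}" "T e"] tw by blast
        then show False using tw by auto
      qed
      ultimately show ?thesis using c tw by blast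
    qed
  qed
qed

lemma pd_ecls: assumes "is_pdCG p \<tau> G" "e \<in> edges G"
  shows "cls (eclasses G) e = ef (edges G) (Ebb p \<tau> G) e"
proof -
  have P: "partition_on (edges G) (eclasses G)" using pd_epart assms(1) .
  let ?X = "cls (eclasses G) e"
  have X: "?X \<in> eclasses G" "e \<in> ?X" using cls_in[OF P] assms(2) by auto
  show ?thesis
  proof (cases "{e} \<in> eclasses G")
    case True
    then have "?X = {e}" using cls_eq[OF P True] by simp
    moreover have "T e \<notin> edges G \<or> T e = e \<or> e \<in> Ebb p \<tau> G \<or> T e \<in> Ebb p \<tau> G"
      using True pd_esing[OF assms] by blast
    ultimately show ?thesis unfolding ef_def by simp
  next
    case False
    have "?X \<noteq> {e}" using False X(1) by metis
    then have "?X = {e, T e}" using pd_eclass[OF assms(1) X] by blast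
    moreover have "\<not> (T e \<notin> edges G \<or> T e = e \<or> e \<in> Ebb p \<tau> G \<or> T e \<in> Ebb p \<tau> G)"
      using False pd_esing[OF assms] by blast
    ultimately show ?thesis unfolding ef_def by simp
  qed
qed

lemma pd_valid: assumes "is_pdCG p \<tau> G"
  shows "valid (edges G) (Lbb q G) (Ebb p \<tau> G)"
  unfolding valid_def
proof (intro conjI)
  show "edges G \<subseteq> FV p" using pd_EFV assms .
  show "Lbb q G \<subseteq> {1..q}" unfolding Lbb_def by auto
  show "Ebb p \<tau> G \<subseteq> edges G \<inter> FL p \<tau>" unfolding Ebb_def by auto
  show "\<forall>e\<in>Ebb p \<tau> G. T e \<in> edges G"
  proof
    fix e assume "e \<in> Ebb p \<tau> G"
    then obtain f where "f \<in> edges G" "f \<in> FR p \<tau>" "e = T f" unfolding Ebb_def by blast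
    then show "T e \<in> edges G" using TT FR_FV by metis
  qed
qed

lemma pd_mk: assumes "is_pdCG p \<tau> G"
  shows "G = mk (edges G) (Lbb q G) (Ebb p \<tau> G)"
proof -
  have "vclasses G = cls (vclasses G) ` V" using part_img pd_vpart assms by blast
  also have "\<dots> = vf (Lbb q G) ` V" using pd_vcls[OF assms] by (rule image_cong[OF refl])
  finally have v: "vclasses G = vf (Lbb q G) ` V" .
  have "eclasses G = cls (eclasses G) ` edges G" using part_img pd_epart assms by blast
  also have "\<dots> = ef (edges G) (Ebb p \<tau> G) ` edges G" using pd_ecls[OF assms] by (rule image_cong[OF refl])
  finally have e: "eclasses G = ef (edges G) (Ebb p \<tau> G) ` edges G" .
  show ?thesis using v e unfolding mk_def vclasses_def eclasses_def by (metis prod.collapse)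
qed

lemma quad_inj: assumes "is_pdCG p \<tau> G" "is_pdCG p \<tau> H" "quad p q \<tau> G = quad p q \<tau> H"
  shows "G = H"
  using pd_mk[OF assms(1)] pd_mk[OF assms(2)] assms(3) by (simp add: quad_def)

end


context pdset
begin

definition subq :: "edge set \<Rightarrow> nat set \<Rightarrow> edge set \<Rightarrow> edge set \<Rightarrow> nat set \<Rightarrow> edge set \<Rightarrow> bool" where
  "subq E1 L1 B1 E2 L2 B2 \<longleftrightarrow> E1 \<subseteq> E2 \<and> L1 \<subseteq> L2 \<and> B1 \<subseteq> B2 \<and>
     (\<forall>e\<in>E1. T e \<notin> E1 \<longrightarrow> T e \<in> E2 \<longrightarrow> e \<in> B2 \<or> T e \<in> B2)"

lemma vchar: assumes "L1 \<subseteq> {1..q}" "L2 \<subseteq> {1..q}"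
  shows "(\<forall>i\<in>V. vf L2 i \<subseteq> vf L1 i) \<longleftrightarrow> L1 \<subseteq> L2"
proof
  assume a: "\<forall>i\<in>V. vf L2 i \<subseteq> vf L1 i"
  show "L1 \<subseteq> L2"
  proof
    fix i assume i: "i \<in> L1"
    then have iV: "i \<in> V" "i \<le> q" using assms(1) qp V_iff by auto
    then have "vf L1 i = {i}" using i by (simp add: vf_def)
    then have "vf L2 i \<subseteq> {i}" using a iV by blast
    then have "i \<in> L2 \<or> \<tau> i \<in> L2" using tneq[OF iV(1)] unfolding vf_def by (auto split: if_splits)
    moreover have "\<tau> i \<notin> L2" using side[OF iV(1)] iV assms(2) by auto
    ultimately show "i \<in> L2" by blast
  qed
next
  assume "L1 \<subseteq> L2"
  then show "\<forall>i\<in>V. vf L2 i \<subseteq> vf L1 i" unfolding vf_def by auto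
qed

lemma ef_sub_iff: assumes "E1 \<subseteq> FV p" "e \<in> E1"
  shows "ef E2 B2 e \<subseteq> ef E1 B1 e \<longleftrightarrow>
    ((T e \<notin> E1 \<or> T e = e \<or> e \<in> B1 \<or> T e \<in> B1) \<longrightarrow> (T e \<notin> E2 \<or> T e = e \<or> e \<in> B2 \<or> T e \<in> B2))"
proof (cases "T e \<notin> E2 \<or> T e = e \<or> e \<in> B2 \<or> T e \<in> B2")
  case True
  then have "ef E2 B2 e = {e}" by (simp add: ef_def)
  moreover have "e \<in> ef E1 B1 e" using assms(2) by (rule ef1)
  ultimately show ?thesis using True by simp
next
  case False
  then have a: "ef E2 B2 e = {e, T e}" "T e \<noteq> e" by (simp_all add: ef_def)
  show ?thesis
  proof (cases "T e \<notin> E1 \<or> T e = e \<or> e \<in> B1 \<or> T e \<in> B1")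
    case True
    then have "ef E1 B1 e = {e}" by (simp add: ef_def)
    then show ?thesis using a True False by blast
  next
    case False
    then have "ef E1 B1 e = {e, T e}" by (simp add: ef_def)
    then show ?thesis using a False by blast
  qed
qed

lemma echar: assumes "valid E1 L1 B1" "valid E2 L2 B2" "E1 \<subseteq> E2"
  shows "(\<forall>e\<in>E1. ef E2 B2 e \<subseteq> ef E1 B1 e) \<longleftrightarrow>
     B1 \<subseteq> B2 \<and> (\<forall>e\<in>E1. T e \<notin> E1 \<longrightarrow> T e \<in> E2 \<longrightarrow> e \<in> B2 \<or> T e \<in> B2)"
proof -
  have v1: "E1 \<subseteq> FV p" "B1 \<subseteq> E1 \<inter> FL p \<tau>" "\<forall>e\<in>B1. T e \<in> E1" using assms(1) valid_def by auto
  have v2: "E2 \<subseteq> FV p" "B2 \<subseteq> E2 \<inter> FL p \<tau>" "\<forall>e\<in>B2. T e \<in> E2" using assms(2) valid_def by auto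
  have "(\<forall>e\<in>E1. ef E2 B2 e \<subseteq> ef E1 B1 e) \<longleftrightarrow>
     (\<forall>e\<in>E1. (T e \<notin> E1 \<or> T e = e \<or> e \<in> B1 \<or> T e \<in> B1) \<longrightarrow> (T e \<notin> E2 \<or> T e = e \<or> e \<in> B2 \<or> T e \<in> B2))"
    by (rule ball_cong[OF refl]) (rule ef_sub_iff[OF v1(1)])
  also have "\<dots> \<longleftrightarrow> B1 \<subseteq> B2 \<and> (\<forall>e\<in>E1. T e \<notin> E1 \<longrightarrow> T e \<in> E2 \<longrightarrow> e \<in> B2 \<or> T e \<in> B2)"
  proof
    assume H: "\<forall>e\<in>E1. (T e \<notin> E1 \<or> T e = e \<or> e \<in> B1 \<or> T e \<in> B1) \<longrightarrow> (T e \<notin> E2 \<or> T e = e \<or> e \<in> B2 \<or> T e \<in> B2)"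
    have "B1 \<subseteq> B2"
    proof
      fix e assume eB: "e \<in> B1"
      then have e: "e \<in> E1" "e \<in> FL p \<tau>" "T e \<in> E1" using v1 by auto
      then have "T e \<in> FR p \<tau>" "T e \<noteq> e" using FL_to_FR FL_neq by auto
      then have "T e \<notin> B2" using v2 FL_FR_disj by blast
      moreover have "T e \<in> E2" using e assms(3) by blast
      ultimately show "e \<in> B2" using H[rule_format, OF e(1)] eB \<open>T e \<noteq> e\<close> by blast
    qed
    moreover have "\<forall>e\<in>E1. T e \<notin> E1 \<longrightarrow> T e \<in> E2 \<longrightarrow> e \<in> B2 \<or> T e \<in> B2"
    proof (intro ballI impI)
      fix e assume "e \<in> E1" "T e \<notin> E1" "T e \<in> E2"
      moreover then have "T e \<noteq> e" by auto
      ultimately show "e \<in> B2 \<or> T e \<in> B2" using H[rule_format, of e] by blast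
    qed
    ultimately show "B1 \<subseteq> B2 \<and> (\<forall>e\<in>E1. T e \<notin> E1 \<longrightarrow> T e \<in> E2 \<longrightarrow> e \<in> B2 \<or> T e \<in> B2)" ..
  next
    assume H: "B1 \<subseteq> B2 \<and> (\<forall>e\<in>E1. T e \<notin> E1 \<longrightarrow> T e \<in> E2 \<longrightarrow> e \<in> B2 \<or> T e \<in> B2)"
    show "\<forall>e\<in>E1. (T e \<notin> E1 \<or> T e = e \<or> e \<in> B1 \<or> T e \<in> B1) \<longrightarrow> (T e \<notin> E2 \<or> T e = e \<or> e \<in> B2 \<or> T e \<in> B2)"
    proof (intro ballI impI)
      fix e assume e: "e \<in> E1" and c: "T e \<notin> E1 \<or> T e = e \<or> e \<in> B1 \<or> T e \<in> B1"
      show "T e \<notin> E2 \<or> T e = e \<or> e \<in> B2 \<or> T e \<in> B2"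
        using c H e by (metis subsetD)
    qed
  qed
  finally show ?thesis .
qed

lemma char: assumes H: "is_pdCG p \<tau> H" and G: "is_pdCG p \<tau> G"
  shows "sub_s H G \<longleftrightarrow> subq (edges H) (Lbb q H) (Ebb p \<tau> H) (edges G) (Lbb q G) (Ebb p \<tau> G)"
proof -
  have vH: "valid (edges H) (Lbb q H) (Ebb p \<tau> H)" using pd_valid H .
  have vG: "valid (edges G) (Lbb q G) (Ebb p \<tau> G)" using pd_valid G .
  have "(\<forall>X\<in>vclasses H. \<exists>S\<subseteq>vclasses G. X = \<Union>S) \<longleftrightarrow> (\<forall>i\<in>V. cls (vclasses G) i \<subseteq> cls (vclasses H) i)"
    using union_classes[OF pd_vpart[OF H] pd_vpart[OF G]] by blast
  also have "\<dots> \<longleftrightarrow> (\<forall>i\<in>V. vf (Lbb q G) i \<subseteq> vf (Lbb q H) i)"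
    using pd_vcls[OF H] pd_vcls[OF G] by simp
  also have "\<dots> \<longleftrightarrow> Lbb q H \<subseteq> Lbb q G"
    by (rule vchar) (use vH vG valid_def in auto)
  finally have V: "(\<forall>X\<in>vclasses H. \<exists>S\<subseteq>vclasses G. X = \<Union>S) \<longleftrightarrow> Lbb q H \<subseteq> Lbb q G" .
  show ?thesis
  proof (cases "edges H \<subseteq> edges G")
    case False then show ?thesis unfolding sub_s_def subq_def by blast
  next
    case True
    have "(\<forall>X\<in>eclasses H. \<exists>S\<subseteq>eclasses G. X = \<Union>S) \<longleftrightarrow> (\<forall>e\<in>edges H. cls (eclasses G) e \<subseteq> cls (eclasses H) e)"
      using union_classes[OF pd_epart[OF H] pd_epart[OF G] True] by blast
    also have "\<dots> \<longleftrightarrow> (\<forall>e\<in>edges H. ef (edges G) (Ebb p \<tau> G) e \<subseteq> ef (edges H) (Ebb p \<tau> H) e)"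
    proof (rule ball_cong[OF refl])
      fix e assume e: "e \<in> edges H"
      then have "e \<in> edges G" using True by blast
      then show "cls (eclasses G) e \<subseteq> cls (eclasses H) e \<longleftrightarrow> ef (edges G) (Ebb p \<tau> G) e \<subseteq> ef (edges H) (Ebb p \<tau> H) e"
        using pd_ecls[OF H e] pd_ecls[OF G] by simp
    qed
    also have "\<dots> \<longleftrightarrow> Ebb p \<tau> H \<subseteq> Ebb p \<tau> G \<and> (\<forall>e\<in>edges H. T e \<notin> edges H \<longrightarrow> T e \<in> edges G \<longrightarrow> e \<in> Ebb p \<tau> G \<or> T e \<in> Ebb p \<tau> G)"
      using echar[OF vH vG True] .
    finally show ?thesis using V True unfolding sub_s_def subq_def by blast
  qed
qed

lemma char_mk: assumes "is_pdCG p \<tau> H" "valid E L B"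
  shows "sub_s H (mk E L B) \<longleftrightarrow> subq (edges H) (Lbb q H) (Ebb p \<tau> H) E L B"
  using char[OF assms(1) mk_pd[OF assms(2)]] mk_edges mk_Lbb[OF assms(2)] mk_Ebb[OF assms(2)] by simp

lemma char_mk2: assumes "valid E L B" "is_pdCG p \<tau> G"
  shows "sub_s (mk E L B) G \<longleftrightarrow> subq E L B (edges G) (Lbb q G) (Ebb p \<tau> G)"
  using char[OF mk_pd[OF assms(1)] assms(2)] mk_edges mk_Lbb[OF assms(1)] mk_Ebb[OF assms(1)] by simp

lemma meet_eq:
  assumes v: "valid E L B"
    and s1: "sub_s (mk E L B) H1" and s2: "sub_s (mk E L B) H2"
    and gr: "\<And>F. is_pdCG p \<tau> F \<Longrightarrow> sub_s F H1 \<Longrightarrow> sub_s F H2 \<Longrightarrow> sub_s F (mk E L B)"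
  shows "meet_s p \<tau> H1 H2 = mk E L B"
  unfolding meet_s_def
proof (rule the_equality)
  show "is_pdCG p \<tau> (mk E L B) \<and> sub_s (mk E L B) H1 \<and> sub_s (mk E L B) H2 \<and>
    (\<forall>F. is_pdCG p \<tau> F \<and> sub_s F H1 \<and> sub_s F H2 \<longrightarrow> sub_s F (mk E L B))"
    using mk_pd[OF v] s1 s2 gr by blast
  fix M assume M: "is_pdCG p \<tau> M \<and> sub_s M H1 \<and> sub_s M H2 \<and>
    (\<forall>F. is_pdCG p \<tau> F \<and> sub_s F H1 \<and> sub_s F H2 \<longrightarrow> sub_s F M)"
  then have a: "sub_s M (mk E L B)" "sub_s (mk E L B) M" using gr mk_pd[OF v] s1 s2 by blast+
  have "subq (edges M) (Lbb q M) (Ebb p \<tau> M) E L B" using a(1) char_mk M v by blast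
  moreover have "subq E L B (edges M) (Lbb q M) (Ebb p \<tau> M)" using a(2) char_mk2 M v by blast
  ultimately have "quad p q \<tau> M = quad p q \<tau> (mk E L B)"
    using mk_quad[OF v] unfolding subq_def quad_def by auto
  then show "M = mk E L B" using quad_inj M mk_pd[OF v] by blast
qed

end


context pdset
begin

definition coverq :: "edge set \<Rightarrow> nat set \<Rightarrow> edge set \<Rightarrow> edge set \<times> nat set \<times> edge set \<Rightarrow> bool" where
  "coverq E L B Q \<longleftrightarrow>
     (\<exists>i\<in>L. Q = (E, L - {i}, B)) \<or>
     (\<exists>r\<in>B. Q = (E, L, B - {r})) \<or>
     (\<exists>r\<in>B. Q = (E - {r}, L, B - {r})) \<or>
     (\<exists>r\<in>B. Q = (E - {T r}, L, B - {r})) \<or>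
     (\<exists>e\<in>E. (T e = e \<or> T e \<notin> E) \<and> Q = (E - {e}, L, B)) \<or>
     (\<exists>e\<in>E. T e \<in> E \<and> T e \<noteq> e \<and> e \<notin> B \<and> T e \<notin> B \<and> Q = (E - {e, T e}, L, B))"

lemma cover_step:
  assumes H: "is_pdCG p \<tau> H" and G: "is_pdCG p \<tau> G" and cov: "covered_s p \<tau> H G"
    and v: "valid E' L' B'"
    and s1: "subq (edges H) (Lbb q H) (Ebb p \<tau> H) E' L' B'"
    and s2: "subq E' L' B' (edges G) (Lbb q G) (Ebb p \<tau> G)"
    and ne: "(E', L', B') \<noteq> (edges G, Lbb q G, Ebb p \<tau> G)"
  shows "quad p q \<tau> H = (E', L', B')"
proof -
  let ?F = "mk E' L' B'"
  have F: "is_pdCG p \<tau> ?F" using mk_pd[OF v] .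
  have a: "sub_s H ?F" using char_mk[OF H v] s1 by blast
  have b: "sub_s ?F G" using char_mk2[OF v G] s2 by blast
  have qF: "quad p q \<tau> ?F = (E', L', B')" using mk_quad[OF v] .
  have c: "?F \<noteq> G" using qF ne unfolding quad_def by auto
  have "H = ?F" using cov F a b c unfolding covered_s_def by blast
  then show ?thesis using qF by simp
qed

lemma cover_class:
  assumes H: "is_pdCG p \<tau> H" and G: "is_pdCG p \<tau> G" and cov: "covered_s p \<tau> H G"
  shows "coverq (edges G) (Lbb q G) (Ebb p \<tau> G) (quad p q \<tau> H)"
proof -
  define E where "E = edges G"
  define L where "L = Lbb q G"
  define B where "B = Ebb p \<tau> G"
  define EH where "EH = edges H"
  define LH where "LH = Lbb q H"
  define BH where "BH = Ebb p \<tau> H"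
  have vG: "valid E L B" using pd_valid[OF G] unfolding E_def L_def B_def .
  have vH: "valid EH LH BH" using pd_valid[OF H] unfolding EH_def LH_def BH_def .
  have EF: "E \<subseteq> FV p" and LQ: "L \<subseteq> {1..q}" and BE: "B \<subseteq> E" and BL: "B \<subseteq> FL p \<tau>" and BT: "\<forall>e\<in>B. T e \<in> E"
    using vG valid_def by auto
  have BHE: "BH \<subseteq> EH" and BHT: "\<forall>e\<in>BH. T e \<in> EH" using vH valid_def by auto
  have S: "subq EH LH BH E L B"
    using char[OF H G] cov unfolding covered_s_def EH_def LH_def BH_def E_def L_def B_def by blast
  then have S1: "EH \<subseteq> E" "LH \<subseteq> L" "BH \<subseteq> B" and S2: "\<forall>e\<in>EH. T e \<notin> EH \<longrightarrow> T e \<in> E \<longrightarrow> e \<in> B \<or> T e \<in> B"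
    unfolding subq_def by auto
  have HG: "H \<noteq> G" using cov unfolding covered_s_def by blast
  have qH: "quad p q \<tau> H = (EH, LH, BH)" unfolding quad_def EH_def LH_def BH_def by simp
  have qne: "(EH, LH, BH) \<noteq> (E, L, B)"
  proof
    assume "(EH, LH, BH) = (E, L, B)"
    then have "quad p q \<tau> H = quad p q \<tau> G" using qH unfolding quad_def E_def L_def B_def by simp
    then show False using quad_inj[OF H G] HG by blast
  qed
  have step: "quad p q \<tau> H = (E', L', B')"
    if "valid E' L' B'" "subq EH LH BH E' L' B'" "subq E' L' B' E L B" "(E', L', B') \<noteq> (E, L, B)"
    for E' L' B'
    using cover_step[OF H G cov that(1)] that(2-4) unfolding EH_def LH_def BH_def E_def L_def B_def by blast
  have TTE: "T (T e) = e" if "e \<in> E" for e using TT EF that by blast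
  have TFR: "T r \<in> FR p \<tau>" if "r \<in> B" for r using FL_to_FR BL that by blast
  have "coverq E L B (quad p q \<tau> H)"
  proof (cases "\<exists>i\<in>L. i \<notin> LH")
    case True
    then obtain i where i: "i \<in> L" "i \<notin> LH" by blast
    have "quad p q \<tau> H = (E, L - {i}, B)"
    proof (rule step)
      show "valid E (L - {i}) B" using vG unfolding valid_def by blast
      show "subq EH LH BH E (L - {i}) B" using S i unfolding subq_def by blast
      show "subq E (L - {i}) B E L B" unfolding subq_def by blast
      show "(E, L - {i}, B) \<noteq> (E, L, B)" using i by blast
    qed
    then show ?thesis unfolding coverq_def using i by blast
  next
    case False
    then have LL: "LH = L" using S1 by blast
    show ?thesis
    proof (cases "\<exists>r\<in>B. r \<notin> BH \<and> r \<in> EH \<and> T r \<in> EH")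
      case True
      then obtain r where r: "r \<in> B" "r \<notin> BH" "r \<in> EH" "T r \<in> EH" by blast
      have "quad p q \<tau> H = (E, L, B - {r})"
      proof (rule step)
        show "valid E L (B - {r})" using vG unfolding valid_def by blast
        show "subq EH LH BH E L (B - {r})" unfolding subq_def
        proof (intro conjI ballI impI)
          show "EH \<subseteq> E" "LH \<subseteq> L" using S1 by auto
          show "BH \<subseteq> B - {r}" using S1 r by blast
          fix e assume e: "e \<in> EH" "T e \<notin> EH" "T e \<in> E"
          have "e \<noteq> r" using e r by blast
          moreover have "T e \<noteq> r" using e r by blast
          ultimately show "e \<in> B - {r} \<or> T e \<in> B - {r}" using S2 e by blast
        qed
        show "subq E L (B - {r}) E L B" unfolding subq_def by blast
        show "(E, L, B - {r}) \<noteq> (E, L, B)" using r by blast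
      qed
      then show ?thesis unfolding coverq_def using r by blast
    next
      case False2: False
      show ?thesis
      proof (cases "\<exists>r\<in>B. r \<notin> EH")
        case True
        then obtain r where r: "r \<in> B" "r \<notin> EH" by blast
        have rL: "r \<in> FL p \<tau>" "r \<in> E" using r BL BE by auto
        have "quad p q \<tau> H = (E - {r}, L, B - {r})"
        proof (rule step)
          show "valid (E - {r}) L (B - {r})" unfolding valid_def
          proof (intro conjI ballI)
            show "E - {r} \<subseteq> FV p" "L \<subseteq> {1..q}" using EF LQ by auto
            show "B - {r} \<subseteq> (E - {r}) \<inter> FL p \<tau>" using BE BL by blast
            fix e assume e: "e \<in> B - {r}"
            then have "T e \<in> FR p \<tau>" "T e \<in> E" using TFR BT by auto
            then show "T e \<in> E - {r}" using rL FL_FR_disj by blast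
          qed
          show "subq EH LH BH (E - {r}) L (B - {r})" unfolding subq_def
          proof (intro conjI ballI impI)
            show "EH \<subseteq> E - {r}" "LH \<subseteq> L" using S1 r by auto
            show "BH \<subseteq> B - {r}" using S1 r BHE by blast
            fix e assume e: "e \<in> EH" "T e \<notin> EH" "T e \<in> E - {r}"
            have "e \<noteq> r" using e r by blast
            moreover have "T e \<noteq> r" using e r by blast
            ultimately show "e \<in> B - {r} \<or> T e \<in> B - {r}" using S2 e by blast
          qed
          show "subq (E - {r}) L (B - {r}) E L B" unfolding subq_def
          proof (intro conjI ballI impI)
            show "E - {r} \<subseteq> E" "L \<subseteq> L" "B - {r} \<subseteq> B" by auto
            fix e assume e: "e \<in> E - {r}" "T e \<notin> E - {r}" "T e \<in> E"
            then have "T e = r" by blast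
            then show "e \<in> B \<or> T e \<in> B" using r by blast
          qed
          show "(E - {r}, L, B - {r}) \<noteq> (E, L, B)" using rL by blast
        qed
        then show ?thesis unfolding coverq_def using r by blast
      next
        case False3: False
        show ?thesis
        proof (cases "\<exists>r\<in>B. T r \<notin> EH")
          case True
          then obtain r where r: "r \<in> B" "T r \<notin> EH" by blast
          have rL: "r \<in> FL p \<tau>" "r \<in> E" "T r \<in> E" "T r \<in> FR p \<tau>" using r BL BE BT TFR by auto
          have "quad p q \<tau> H = (E - {T r}, L, B - {r})"
          proof (rule step)
            show "valid (E - {T r}) L (B - {r})" unfolding valid_def
            proof (intro conjI ballI)
              show "E - {T r} \<subseteq> FV p" "L \<subseteq> {1..q}" using EF LQ by auto
              show "B - {r} \<subseteq> (E - {T r}) \<inter> FL p \<tau>" using BE BL rL FL_FR_disj by blast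
              fix e assume e: "e \<in> B - {r}"
              then have "T e \<in> E" "e \<in> E" using BT BE by auto
              moreover have "T e \<noteq> T r"
              proof
                assume "T e = T r"
                then have "T (T e) = T (T r)" by simp
                then show False using TTE[of e] TTE[of r] e rL \<open>e \<in> E\<close> by simp
              qed
              ultimately show "T e \<in> E - {T r}" by blast
            qed
            show "subq EH LH BH (E - {T r}) L (B - {r})" unfolding subq_def
            proof (intro conjI ballI impI)
              show "EH \<subseteq> E - {T r}" "LH \<subseteq> L" using S1 r by auto
              show "BH \<subseteq> B - {r}" using S1 r BHT by blast
              fix e assume e: "e \<in> EH" "T e \<notin> EH" "T e \<in> E - {T r}"
              have "e \<noteq> r" using e by blast
              moreover have "T e \<noteq> r"
              proof
                assume "T e = r"
                then have "e = T r" using TTE e S1 by (metis subsetD)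
                then show False using e r by blast
              qed
              ultimately show "e \<in> B - {r} \<or> T e \<in> B - {r}" using S2 e by blast
            qed
            show "subq (E - {T r}) L (B - {r}) E L B" unfolding subq_def
            proof (intro conjI ballI impI)
              show "E - {T r} \<subseteq> E" "L \<subseteq> L" "B - {r} \<subseteq> B" by auto
              fix e assume e: "e \<in> E - {T r}" "T e \<notin> E - {T r}" "T e \<in> E"
              then have "T e = T r" by blast
              then have "T (T e) = T (T r)" by simp
              then have "e = r" using TTE[of e] TTE[of r] e rL by simp
              then show "e \<in> B \<or> T e \<in> B" using r by blast
            qed
            show "(E - {T r}, L, B - {r}) \<noteq> (E, L, B)" using rL by blast
          qed
          then show ?thesis unfolding coverq_def using r by blast
        next
          case False4: False
          have "B \<subseteq> BH"
          proof
            fix r assume "r \<in> B"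
            then have "r \<in> EH" "T r \<in> EH" using False3 False4 by blast+
            then show "r \<in> BH" using False2 \<open>r \<in> B\<close> by blast
          qed
          then have BB: "BH = B" using S1 by blast
          have "EH \<noteq> E" using qne LL BB by blast
          then obtain e where e: "e \<in> E" "e \<notin> EH" using S1 by blast
          have eB: "e \<notin> B" using e False3 by blast
          show ?thesis
          proof (cases "T e = e \<or> T e \<notin> E")
            case True
            have "quad p q \<tau> H = (E - {e}, L, B)"
            proof (rule step)
              show "valid (E - {e}) L B" unfolding valid_def
              proof (intro conjI ballI)
                show "E - {e} \<subseteq> FV p" "L \<subseteq> {1..q}" using EF LQ by auto
                show "B \<subseteq> (E - {e}) \<inter> FL p \<tau>" using BE BL eB by blast
                fix r assume "r \<in> B"
                then have "T r \<in> EH" using False4 by blast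
                then show "T r \<in> E - {e}" using S1 e by blast
              qed
              show "subq EH LH BH (E - {e}) L B" unfolding subq_def
              proof (intro conjI ballI impI)
                show "EH \<subseteq> E - {e}" using S1 e by blast
                show "LH \<subseteq> L" "BH \<subseteq> B" using LL BB by auto
                fix f assume "f \<in> EH" "T f \<notin> EH" "T f \<in> E - {e}"
                then show "f \<in> B \<or> T f \<in> B" using S2 by blast
              qed
              show "subq (E - {e}) L B E L B" unfolding subq_def
              proof (intro conjI ballI impI)
                show "E - {e} \<subseteq> E" "L \<subseteq> L" "B \<subseteq> B" by auto
                fix f assume f: "f \<in> E - {e}" "T f \<notin> E - {e}" "T f \<in> E"
                then have "T f = e" by blast
                then have "f = T e" using TTE f by (metis DiffD1)
                then show "f \<in> B \<or> T f \<in> B" using True f by auto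
              qed
              show "(E - {e}, L, B) \<noteq> (E, L, B)" using e by blast
            qed
            then show ?thesis unfolding coverq_def using e True by blast
          next
            case False
            then have Te: "T e \<in> E" "T e \<noteq> e" by auto
            have TeH: "T e \<notin> EH"
            proof
              assume a: "T e \<in> EH"
              have "T (T e) = e" using TTE e by blast
              then have "T e \<in> B \<or> e \<in> B" using S2 a e by auto
              then show False
              proof
                assume "T e \<in> B"
                then have "T (T e) \<in> EH" using False4 by blast
                then show False using \<open>T (T e) = e\<close> e by simp
              next
                assume "e \<in> B" then show False using eB by blast
              qed
            qed
            have TeB: "T e \<notin> B" using TeH False3 by blast
            have "quad p q \<tau> H = (E - {e, T e}, L, B)"
            proof (rule step)
              show "valid (E - {e, T e}) L B" unfolding valid_def
              proof (intro conjI ballI)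
                show "E - {e, T e} \<subseteq> FV p" "L \<subseteq> {1..q}" using EF LQ by auto
                show "B \<subseteq> (E - {e, T e}) \<inter> FL p \<tau>" using BE BL eB TeB by blast
                fix r assume "r \<in> B"
                then have "T r \<in> EH" using False4 by blast
                then show "T r \<in> E - {e, T e}" using S1 e TeH by force
              qed
              show "subq EH LH BH (E - {e, T e}) L B" unfolding subq_def
              proof (intro conjI ballI impI)
                show "EH \<subseteq> E - {e, T e}" using S1 e TeH by blast
                show "LH \<subseteq> L" "BH \<subseteq> B" using LL BB by auto
                fix f assume "f \<in> EH" "T f \<notin> EH" "T f \<in> E - {e, T e}"
                then show "f \<in> B \<or> T f \<in> B" using S2 by blast
              qed
              show "subq (E - {e, T e}) L B E L B" unfolding subq_def
              proof (intro conjI ballI impI)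
                show "E - {e, T e} \<subseteq> E" "L \<subseteq> L" "B \<subseteq> B" by auto
                fix f assume f: "f \<in> E - {e, T e}" "T f \<notin> E - {e, T e}" "T f \<in> E"
                then have "T f = e \<or> T f = T e" by blast
                moreover have "T (T f) = f" using TTE f by blast
                moreover have "T (T e) = e" using TTE e by blast
                ultimately have "f = T e \<or> f = e" by metis
                then show "f \<in> B \<or> T f \<in> B" using f by blast
              qed
              show "(E - {e, T e}, L, B) \<noteq> (E, L, B)" using e by blast
            qed
            then show ?thesis unfolding coverq_def using e Te eB TeB by blast
          qed
        qed
      qed
    qed
  qed
  then show ?thesis unfolding E_def L_def B_def .
qed

end


context pdset
begin

lemma K2:
  assumes v: "valid E L B"
    and c1: "coverq E L B (E1, L1, B1)" and c2: "coverq E L B (E2, L2, B2)"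
    and ne: "(E1, L1, B1) \<noteq> (E2, L2, B2)"
    and st: "E1 \<subseteq> E2" "L1 \<subseteq> L2" "B1 \<subseteq> B2"
  shows "\<exists>r\<in>B. (E2, L2, B2) = (E, L, B - {r}) \<and>
           ((E1, L1, B1) = (E - {r}, L, B - {r}) \<or> (E1, L1, B1) = (E - {T r}, L, B - {r}))"
proof -
  have BE: "\<forall>r\<in>B. r \<in> E \<and> T r \<in> E \<and> T r \<noteq> r" using v FL_neq unfolding valid_def by blast
  have TTE: "\<forall>x\<in>E. T (T x) = x" using v TT unfolding valid_def by blast
  have TI: "\<forall>x\<in>E. \<forall>y\<in>E. T x = T y \<longrightarrow> x = y" using TTE by metis
  note facts = ne st BE TTE
  show ?thesis using c2 c1 unfolding coverq_def
    apply (elim disjE bexE)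
    subgoal using facts by (auto)
    subgoal using facts by (auto)
    subgoal using facts by (auto)
    subgoal using facts by (auto)
    subgoal using facts by (auto)
    subgoal using facts by (auto)
    subgoal using facts by (auto)
    subgoal using facts by (auto)
    subgoal using facts by (auto)
    subgoal using facts by (auto)
    subgoal using facts by (auto)
    subgoal using facts by (auto)
    subgoal using facts by (auto)
    subgoal using facts by (auto)
    subgoal using facts by (auto)
    subgoal using facts by (auto)
    subgoal using facts by (auto)
    subgoal using facts by (auto)
    subgoal using facts by (auto)
    subgoal using facts by (auto)
    subgoal using facts by (auto)
    subgoal premises prems for x y
    proof -
      have "x = y" using prems st by auto
      then show ?thesis using prems facts by auto
    qed
    subgoal using facts by (auto)
    subgoal using facts by (auto)
    subgoal using facts by (auto)
    subgoal using facts by (auto)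
    subgoal using facts by (auto)
    subgoal using facts by (auto)
    subgoal using facts by (auto)
    subgoal using facts by (auto)
    subgoal premises prems for r e
    proof -
      have "e \<notin> E1" using prems st by auto
      then have "e = T r" using prems by auto
      then have "T e = r" using TTE BE prems by auto
      then show ?thesis using prems BE by auto
    qed
    subgoal using facts by (auto)
    subgoal using facts by (auto)
    subgoal premises prems for e ea
    proof -
      have "e \<notin> E1" using prems st by auto
      then have "e = ea \<or> e = T ea" using prems by auto
      then show ?thesis
      proof
        assume "e = ea" then show ?thesis using prems by auto
      next
        assume "e = T ea" then have "T e = ea" using TTE prems by auto
        then show ?thesis using prems by auto
      qed
    qed
    subgoal using facts by (auto)
    subgoal premises prems for e ea
    proof -
      have "e \<notin> E1" using prems st by auto
      then have "e = ea \<or> e = T ea" using prems by auto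
      then show ?thesis
      proof
        assume "e = ea" then show ?thesis using prems ne by auto
      next
        assume a: "e = T ea" then have "T e = ea" using TTE prems by auto
        then have "{e, T e} = {ea, T ea}" using a by auto
        then show ?thesis using prems ne by auto
      qed
    qed
    done
qed

lemma K1a:
  assumes v: "valid E L B"
    and c2: "coverq E L B (E2, L2, B2)"
    and e: "e \<in> E" "e \<in> E2" "T e \<notin> E2" "T e \<in> E"
  shows "\<exists>r\<in>B. (e = r \<or> T e = r) \<and> B2 = B - {r} \<and> L2 = L \<and> E2 = E - {T e}"
proof -
  have BE: "\<forall>r\<in>B. r \<in> E \<and> T r \<in> E \<and> T r \<noteq> r" using v FL_neq unfolding valid_def by blast
  have TTE: "\<forall>x\<in>E. T (T x) = x" using v TT unfolding valid_def by blast
  have Te: "T (T e) = e" using TTE e by blast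
  note facts = e BE TTE Te
  show ?thesis using c2 unfolding coverq_def
    apply (elim disjE bexE)
    subgoal using facts by (auto)
    subgoal using facts by (auto)
    subgoal using facts by (auto)
    subgoal premises prems for r
    proof -
      have "T e = T r" using prems e by auto
      then have "T (T e) = T (T r)" by simp
      moreover have "T (T r) = r" using TTE BE prems by auto
      ultimately have "e = r" using Te by simp
      then show ?thesis using prems by auto
    qed
    subgoal using facts by (auto)
    subgoal premises prems for ea
    proof -
      have "T e = ea \<or> T e = T ea" using prems e by auto
      then show ?thesis
      proof
        assume "T e = ea" then have "T ea = e" using Te by auto
        then show ?thesis using prems e by auto
      next
        assume "T e = T ea" then have "T (T e) = T (T ea)" by simp
        moreover have "T (T ea) = ea" using TTE prems by auto
        ultimately have "e = ea" using Te by simp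
        then show ?thesis using prems e by auto
      qed
    qed
    done
qed

lemma K1b:
  assumes v: "valid E L B"
    and c1: "coverq E L B (E1, L1, B1)"
    and r: "r \<in> B" "r \<in> E1" "T r \<in> E1"
    and nst2: "\<not> (E2 \<subseteq> E1 \<and> L \<subseteq> L1 \<and> B - {r} \<subseteq> B1)" and E2: "E2 \<subseteq> E"
  shows "r \<in> B1"
proof -
  have BE: "\<forall>r\<in>B. r \<in> E \<and> T r \<in> E \<and> T r \<noteq> r" using v FL_neq unfolding valid_def by blast
  note facts = r nst2 E2 BE
  show ?thesis using c1 unfolding coverq_def
    apply (elim disjE bexE)
    subgoal using facts by (auto)
    subgoal using facts by (auto)
    subgoal using facts by (auto)
    subgoal using facts by (auto)
    subgoal using facts by (auto)
    subgoal using facts by (auto)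
    done
qed

lemma K1:
  assumes v: "valid E L B"
    and c1: "coverq E L B (E1, L1, B1)" and c2: "coverq E L B (E2, L2, B2)"
    and nst2: "\<not> (E2 \<subseteq> E1 \<and> L2 \<subseteq> L1 \<and> B2 \<subseteq> B1)"
    and E1E: "E1 \<subseteq> E" and E2E: "E2 \<subseteq> E"
    and e: "e \<in> E1" "e \<in> E2" "T e \<notin> E2" "T e \<in> E1"
  shows "e \<in> B1 \<or> T e \<in> B1"
proof -
  have TTE: "\<forall>x\<in>E. T (T x) = x" using v TT unfolding valid_def by blast
  have eE: "e \<in> E" "T e \<in> E" using e E1E by auto
  obtain r where r: "r \<in> B" "e = r \<or> T e = r" "B2 = B - {r}" "L2 = L" "E2 = E - {T e}"
    using K1a[OF v c2 eE(1) e(2,3) eE(2)] by blast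
  have "r \<in> E1 \<and> T r \<in> E1"
  proof (cases "e = r")
    case True then show ?thesis using e by blast
  next
    case False
    then have "T e = r" using r by blast
    then have "T r = e" using TTE eE by auto
    then show ?thesis using e \<open>T e = r\<close> by force
  qed
  then have "r \<in> B1" using K1b[OF v c1 r(1), of E2] nst2 r E2E by blast
  then show ?thesis using r by blast
qed

end


context pdset
begin

lemma quad_eq: "quad p q \<tau> H = (edges H, Lbb q H, Ebb p \<tau> H)" by (simp add: quad_def)

lemma meet_case1:
  assumes G: "is_pdCG p \<tau> G" and H1: "is_pdCG p \<tau> H1" and H2: "is_pdCG p \<tau> H2"
    and c1: "coverq (edges G) (Lbb q G) (Ebb p \<tau> G) (edges H1, Lbb q H1, Ebb p \<tau> H1)"
    and c2: "coverq (edges G) (Lbb q G) (Ebb p \<tau> G) (edges H2, Lbb q H2, Ebb p \<tau> H2)"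
    and s1: "edges H1 \<subseteq> edges G" and s2: "edges H2 \<subseteq> edges G"
    and n1: "\<not> sub_t p q \<tau> H1 H2" and n2: "\<not> sub_t p q \<tau> H2 H1"
  shows "meet_s p \<tau> H1 H2 = mk (edges H1 \<inter> edges H2) (Lbb q H1 \<inter> Lbb q H2) (Ebb p \<tau> H1 \<inter> Ebb p \<tau> H2)"
proof -
  define E where "E = edges G"
  define L where "L = Lbb q G"
  define B where "B = Ebb p \<tau> G"
  define E1 where "E1 = edges H1"
  define L1 where "L1 = Lbb q H1"
  define B1 where "B1 = Ebb p \<tau> H1"
  define E2 where "E2 = edges H2"
  define L2 where "L2 = Lbb q H2"
  define B2 where "B2 = Ebb p \<tau> H2"
  have vG: "valid E L B" using pd_valid[OF G] unfolding E_def L_def B_def .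
  have v1: "valid E1 L1 B1" using pd_valid[OF H1] unfolding E1_def L1_def B1_def .
  have v2: "valid E2 L2 B2" using pd_valid[OF H2] unfolding E2_def L2_def B2_def .
  have c1': "coverq E L B (E1, L1, B1)" using c1 unfolding E_def L_def B_def E1_def L1_def B1_def .
  have c2': "coverq E L B (E2, L2, B2)" using c2 unfolding E_def L_def B_def E2_def L2_def B2_def .
  have n1': "\<not> (E1 \<subseteq> E2 \<and> L1 \<subseteq> L2 \<and> B1 \<subseteq> B2)" using n1 unfolding sub_t_def E1_def L1_def B1_def E2_def L2_def B2_def .
  have n2': "\<not> (E2 \<subseteq> E1 \<and> L2 \<subseteq> L1 \<and> B2 \<subseteq> B1)" using n2 unfolding sub_t_def E1_def L1_def B1_def E2_def L2_def B2_def .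
  have s1': "E1 \<subseteq> E" and s2': "E2 \<subseteq> E" using s1 s2 unfolding E_def E1_def E2_def by auto
  have B1L: "B1 \<subseteq> FL p \<tau>" and B2L: "B2 \<subseteq> FL p \<tau>" using v1 v2 valid_def by auto
  have vM: "valid (E1 \<inter> E2) (L1 \<inter> L2) (B1 \<inter> B2)" using v1 v2 unfolding valid_def by blast
  have "meet_s p \<tau> H1 H2 = mk (E1 \<inter> E2) (L1 \<inter> L2) (B1 \<inter> B2)"
  proof (rule meet_eq[OF vM])
    show "sub_s (mk (E1 \<inter> E2) (L1 \<inter> L2) (B1 \<inter> B2)) H1"
      unfolding char_mk2[OF vM H1] subq_def E1_def[symmetric] L1_def[symmetric] B1_def[symmetric]
    proof (intro conjI ballI impI)
      show "E1 \<inter> E2 \<subseteq> E1" "L1 \<inter> L2 \<subseteq> L1" "B1 \<inter> B2 \<subseteq> B1" by auto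
      fix e assume e: "e \<in> E1 \<inter> E2" "T e \<notin> E1 \<inter> E2" "T e \<in> E1"
      show "e \<in> B1 \<or> T e \<in> B1" using K1[OF vG c1' c2' n2' s1' s2'] e by blast
    qed
    show "sub_s (mk (E1 \<inter> E2) (L1 \<inter> L2) (B1 \<inter> B2)) H2"
      unfolding char_mk2[OF vM H2] subq_def E2_def[symmetric] L2_def[symmetric] B2_def[symmetric]
    proof (intro conjI ballI impI)
      show "E1 \<inter> E2 \<subseteq> E2" "L1 \<inter> L2 \<subseteq> L2" "B1 \<inter> B2 \<subseteq> B2" by auto
      fix e assume e: "e \<in> E1 \<inter> E2" "T e \<notin> E1 \<inter> E2" "T e \<in> E2"
      show "e \<in> B2 \<or> T e \<in> B2" using K1[OF vG c2' c1' n1' s2' s1'] e by blast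
    qed
    fix F assume F: "is_pdCG p \<tau> F" and f1: "sub_s F H1" and f2: "sub_s F H2"
    have a: "subq (edges F) (Lbb q F) (Ebb p \<tau> F) E1 L1 B1" using char[OF F H1] f1 unfolding E1_def L1_def B1_def by blast
    have b: "subq (edges F) (Lbb q F) (Ebb p \<tau> F) E2 L2 B2" using char[OF F H2] f2 unfolding E2_def L2_def B2_def by blast
    show "sub_s F (mk (E1 \<inter> E2) (L1 \<inter> L2) (B1 \<inter> B2))"
      unfolding char_mk[OF F vM] subq_def
    proof (intro conjI ballI impI)
      show "edges F \<subseteq> E1 \<inter> E2" "Lbb q F \<subseteq> L1 \<inter> L2" "Ebb p \<tau> F \<subseteq> B1 \<inter> B2" using a b unfolding subq_def by auto
      fix e assume e: "e \<in> edges F" "T e \<notin> edges F" "T e \<in> E1 \<inter> E2"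
      have x1: "e \<in> B1 \<or> T e \<in> B1" using a e unfolding subq_def by blast
      have x2: "e \<in> B2 \<or> T e \<in> B2" using b e unfolding subq_def by blast
      show "e \<in> B1 \<inter> B2 \<or> T e \<in> B1 \<inter> B2"
      proof (cases "e \<in> FL p \<tau>")
        case True
        then have "T e \<notin> FL p \<tau>" using FL_to_FR FL_FR_disj by blast
        then show ?thesis using x1 x2 B1L B2L by blast
      next
        case False
        then show ?thesis using x1 x2 B1L B2L by blast
      qed
    qed
  qed
  then show ?thesis unfolding E1_def L1_def B1_def E2_def L2_def B2_def .
qed

lemma valid2:
  assumes vG: "valid E L B" and rB: "r \<in> B"
  shows "valid (E - {r, T r}) L (B - {r})"
proof -
  have EF: "E \<subseteq> FV p" and BE: "B \<subseteq> E" and BL: "B \<subseteq> FL p \<tau>" and BT: "\<forall>b\<in>B. T b \<in> E"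
    using vG valid_def by auto
  have rE0: "r \<in> E" "T r \<in> E" "r \<in> FL p \<tau>" using rB BE BL BT by auto
  have rE: "r \<in> E" "T r \<in> E" "r \<in> FL p \<tau>" "T r \<in> FR p \<tau>" using rE0 FL_to_FR[OF rE0(3)] by auto
  have TTE: "T (T y) = y" if "y \<in> E" for y using TT EF that by blast
  have pair: "y \<in> E \<Longrightarrow> T y \<in> {r, T r} \<Longrightarrow> y \<in> {r, T r}" for y
  proof -
    assume y: "y \<in> E" "T y \<in> {r, T r}"
    then have "T (T y) \<in> {T r, T (T r)}" by auto
    then show "y \<in> {r, T r}" using TTE[OF y(1)] TTE[OF rE(1)] by auto
  qed
  show ?thesis unfolding valid_def
  proof (intro conjI ballI)
    show "E - {r, T r} \<subseteq> FV p" "L \<subseteq> {1..q}" using vG EF unfolding valid_def by auto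
    show "B - {r} \<subseteq> (E - {r, T r}) \<inter> FL p \<tau>" using BE BL rE FL_FR_disj by blast
    fix b assume b: "b \<in> B - {r}"
    then have bE: "b \<in> E" "T b \<in> E" using BE BT by auto
    have "T b \<notin> {r, T r}"
    proof
      assume "T b \<in> {r, T r}"
      then have "b \<in> {r, T r}" using pair bE by blast
      then show False using b rE BL FL_FR_disj by blast
    qed
    then show "T b \<in> E - {r, T r}" using bE by blast
  qed
qed

lemma meet_case2:
  assumes G: "is_pdCG p \<tau> G" and H1: "is_pdCG p \<tau> H1" and H2: "is_pdCG p \<tau> H2"
    and r: "r \<in> Ebb p \<tau> G"
    and q2: "(edges H2, Lbb q H2, Ebb p \<tau> H2) = (edges G, Lbb q G, Ebb p \<tau> G - {r})"
    and q1: "(edges H1, Lbb q H1, Ebb p \<tau> H1) = (edges G - {x}, Lbb q G, Ebb p \<tau> G - {r})"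
    and x: "x = r \<or> x = T r"
  shows "meet_s p \<tau> H1 H2 = mk (edges G - {r, T r}) (Lbb q G) (Ebb p \<tau> G - {r})"
proof -
  define E where "E = edges G"
  define L where "L = Lbb q G"
  define B where "B = Ebb p \<tau> G"
  have vG: "valid E L B" using pd_valid[OF G] unfolding E_def L_def B_def .
  have EF: "E \<subseteq> FV p" and BE: "B \<subseteq> E" and BL: "B \<subseteq> FL p \<tau>" and BT: "\<forall>b\<in>B. T b \<in> E"
    using vG valid_def by auto
  have rB: "r \<in> B" using r unfolding B_def .
  have rE0: "r \<in> E" "T r \<in> E" "r \<in> FL p \<tau>" using rB BE BL BT by auto
  have rE: "r \<in> E" "T r \<in> E" "r \<in> FL p \<tau>" "T r \<in> FR p \<tau>" using rE0 FL_to_FR[OF rE0(3)] by auto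
  have TTE: "T (T y) = y" if "y \<in> E" for y using TT EF that by blast
  have e2: "edges H2 = E" "Lbb q H2 = L" "Ebb p \<tau> H2 = B - {r}" using q2 unfolding E_def L_def B_def by auto
  have e1: "edges H1 = E - {x}" "Lbb q H1 = L" "Ebb p \<tau> H1 = B - {r}" using q1 unfolding E_def L_def B_def by auto
  have pair: "y \<in> E \<Longrightarrow> T y \<in> {r, T r} \<Longrightarrow> y \<in> {r, T r}" for y
  proof -
    assume y: "y \<in> E" "T y \<in> {r, T r}"
    then have "T (T y) \<in> {T r, T (T r)}" by auto
    then show "y \<in> {r, T r}" using TTE[OF y(1)] TTE[OF rE(1)] by auto
  qed
  have vM: "valid (E - {r, T r}) L (B - {r})" using valid2[OF vG rB] .
  have sub_any: "subq (E - {r, T r}) L (B - {r}) E' L (B - {r})" if "E - {r, T r} \<subseteq> E'" "E' \<subseteq> E" for E'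
    unfolding subq_def
  proof (intro conjI ballI impI)
    show "E - {r, T r} \<subseteq> E'" "L \<subseteq> L" "B - {r} \<subseteq> B - {r}" using that by auto
    fix e assume e: "e \<in> E - {r, T r}" "T e \<notin> E - {r, T r}" "T e \<in> E'"
    then have "T e \<in> {r, T r}" using that by blast
    then have "e \<in> {r, T r}" using pair e by blast
    then show "e \<in> B - {r} \<or> T e \<in> B - {r}" using e by blast
  qed
  show ?thesis unfolding E_def[symmetric] L_def[symmetric] B_def[symmetric]
  proof (rule meet_eq[OF vM])
    show "sub_s (mk (E - {r, T r}) L (B - {r})) H1"
      unfolding char_mk2[OF vM H1] e1 by (rule sub_any) (use x in auto)
    show "sub_s (mk (E - {r, T r}) L (B - {r})) H2"
      unfolding char_mk2[OF vM H2] e2 by (rule sub_any) auto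
    fix F assume F: "is_pdCG p \<tau> F" and f1: "sub_s F H1" and f2: "sub_s F H2"
    have a: "subq (edges F) (Lbb q F) (Ebb p \<tau> F) (E - {x}) L (B - {r})" using char[OF F H1] f1 e1 by simp
    have b: "subq (edges F) (Lbb q F) (Ebb p \<tau> F) E L (B - {r})" using char[OF F H2] f2 e2 by simp
    define y where "y = (if x = r then T r else r)"
    have xy: "{x, y} = {r, T r}" "T y = x" using x TTE rE unfolding y_def by auto
    have "y \<notin> edges F"
    proof
      assume yF: "y \<in> edges F"
      have "x \<notin> edges F" using a unfolding subq_def by blast
      then have "T y \<notin> edges F" using xy by simp
      moreover have "T y \<in> E" using xy x rE by auto
      ultimately have "y \<in> B - {r} \<or> T y \<in> B - {r}" using b yF unfolding subq_def by blast
      moreover have "T r \<notin> B" using rE BL FL_FR_disj by blast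
      ultimately show False using xy by auto
    qed
    show "sub_s F (mk (E - {r, T r}) L (B - {r}))"
      unfolding char_mk[OF F vM] subq_def
    proof (intro conjI ballI impI)
      show "edges F \<subseteq> E - {r, T r}" using a \<open>y \<notin> edges F\<close> xy unfolding subq_def by blast
      show "Lbb q F \<subseteq> L" "Ebb p \<tau> F \<subseteq> B - {r}" using a unfolding subq_def by auto
      fix e assume e: "e \<in> edges F" "T e \<notin> edges F" "T e \<in> E - {r, T r}"
      then have "T e \<in> E - {x}" using x by blast
      then show "e \<in> B - {r} \<or> T e \<in> B - {r}" using a e unfolding subq_def by blast
    qed
  qed
qed

end


theorem corollary10:
  fixes p q :: nat and \<tau> :: "nat \<Rightarrow> nat" and H1 H2 G :: cgraph
  assumes tp: "twin_pairing p \<tau>"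
    and qp: "q \<le> p"
    and LR: "\<tau> ` {1..q} = {q+1..p}"
    and pdG: "is_pdCG p \<tau> G" and pd1: "is_pdCG p \<tau> H1" and pd2: "is_pdCG p \<tau> H2"
    and cov1: "covered_s p \<tau> H1 G" and cov2: "covered_s p \<tau> H2 G"
    and ne: "H1 \<noteq> H2"
  shows "(\<not> sub_t p q \<tau> H1 H2 \<and> \<not> sub_t p q \<tau> H2 H1 \<longrightarrow>
            quad p q \<tau> (meet_s p \<tau> H1 H2) = meet_t p q \<tau> H1 H2)
       \<and> (sub_t p q \<tau> H1 H2 \<longrightarrow>
            (\<exists>e\<in>Ebb p \<tau> G. \<exists>Q'.
               quad p q \<tau> H2 = (edges G, Lbb q G, Ebb p \<tau> G - {e}) \<and>
               {quad p q \<tau> H1, Q'} =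
                 {(edges G - {e}, Lbb q G, Ebb p \<tau> G - {e}),
                  (edges G - {tau_e \<tau> e}, Lbb q G, Ebb p \<tau> G - {e})} \<and>
               quad p q \<tau> (meet_s p \<tau> H1 H2) = qmeet (quad p q \<tau> H1) Q'))"
proof -
  interpret P: pdset p q \<tau> using tp qp LR by (rule pdset.intro)
  have c1: "P.coverq (edges G) (Lbb q G) (Ebb p \<tau> G) (edges H1, Lbb q H1, Ebb p \<tau> H1)"
    using P.cover_class[OF pd1 pdG cov1] by (simp add: quad_def)
  have c2: "P.coverq (edges G) (Lbb q G) (Ebb p \<tau> G) (edges H2, Lbb q H2, Ebb p \<tau> H2)"
    using P.cover_class[OF pd2 pdG cov2] by (simp add: quad_def)
  have s1: "edges H1 \<subseteq> edges G" using cov1 unfolding covered_s_def sub_s_def by blast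
  have s2: "edges H2 \<subseteq> edges G" using cov2 unfolding covered_s_def sub_s_def by blast
  have vG: "P.valid (edges G) (Lbb q G) (Ebb p \<tau> G)" using P.pd_valid[OF pdG] .
  have v1: "P.valid (edges H1) (Lbb q H1) (Ebb p \<tau> H1)" using P.pd_valid[OF pd1] .
  have v2: "P.valid (edges H2) (Lbb q H2) (Ebb p \<tau> H2)" using P.pd_valid[OF pd2] .
  have part1: "\<not> sub_t p q \<tau> H1 H2 \<and> \<not> sub_t p q \<tau> H2 H1 \<longrightarrow>
            quad p q \<tau> (meet_s p \<tau> H1 H2) = meet_t p q \<tau> H1 H2"
  proof
    assume n: "\<not> sub_t p q \<tau> H1 H2 \<and> \<not> sub_t p q \<tau> H2 H1"
    have vM: "P.valid (edges H1 \<inter> edges H2) (Lbb q H1 \<inter> Lbb q H2) (Ebb p \<tau> H1 \<inter> Ebb p \<tau> H2)"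
      using v1 v2 unfolding P.valid_def by blast
    have "meet_s p \<tau> H1 H2 = P.mk (edges H1 \<inter> edges H2) (Lbb q H1 \<inter> Lbb q H2) (Ebb p \<tau> H1 \<inter> Ebb p \<tau> H2)"
      using P.meet_case1[OF pdG pd1 pd2 c1 c2 s1 s2] n by blast
    then have "quad p q \<tau> (meet_s p \<tau> H1 H2) = (edges H1 \<inter> edges H2, Lbb q H1 \<inter> Lbb q H2, Ebb p \<tau> H1 \<inter> Ebb p \<tau> H2)"
      using P.mk_quad[OF vM] by simp
    then show "quad p q \<tau> (meet_s p \<tau> H1 H2) = meet_t p q \<tau> H1 H2"
      by (simp add: meet_t_def qmeet_def quad_def)
  qed
  have part2: "sub_t p q \<tau> H1 H2 \<longrightarrow>
            (\<exists>e\<in>Ebb p \<tau> G. \<exists>Q'.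
               quad p q \<tau> H2 = (edges G, Lbb q G, Ebb p \<tau> G - {e}) \<and>
               {quad p q \<tau> H1, Q'} =
                 {(edges G - {e}, Lbb q G, Ebb p \<tau> G - {e}),
                  (edges G - {tau_e \<tau> e}, Lbb q G, Ebb p \<tau> G - {e})} \<and>
               quad p q \<tau> (meet_s p \<tau> H1 H2) = qmeet (quad p q \<tau> H1) Q')"
  proof
    assume st: "sub_t p q \<tau> H1 H2"
    have ne': "(edges H1, Lbb q H1, Ebb p \<tau> H1) \<noteq> (edges H2, Lbb q H2, Ebb p \<tau> H2)"
    proof
      assume "(edges H1, Lbb q H1, Ebb p \<tau> H1) = (edges H2, Lbb q H2, Ebb p \<tau> H2)"
      then have "quad p q \<tau> H1 = quad p q \<tau> H2" by (simp add: quad_def)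
      then show False using P.quad_inj[OF pd1 pd2] ne by blast
    qed
    have st': "edges H1 \<subseteq> edges H2" "Lbb q H1 \<subseteq> Lbb q H2" "Ebb p \<tau> H1 \<subseteq> Ebb p \<tau> H2"
      using st unfolding sub_t_def by auto
    obtain r where r: "r \<in> Ebb p \<tau> G"
      and q2: "(edges H2, Lbb q H2, Ebb p \<tau> H2) = (edges G, Lbb q G, Ebb p \<tau> G - {r})"
      and q1: "(edges H1, Lbb q H1, Ebb p \<tau> H1) = (edges G - {r}, Lbb q G, Ebb p \<tau> G - {r}) \<or>
               (edges H1, Lbb q H1, Ebb p \<tau> H1) = (edges G - {tau_e \<tau> r}, Lbb q G, Ebb p \<tau> G - {r})"
      using P.K2[OF vG c1 c2 ne' st'] by (elim bexE conjE) (rule that; assumption)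
    obtain x where x: "x = r \<or> x = tau_e \<tau> r"
      and q1x: "(edges H1, Lbb q H1, Ebb p \<tau> H1) = (edges G - {x}, Lbb q G, Ebb p \<tau> G - {r})"
      using q1 by (elim disjE) (rule that; simp)+
    define y where "y = (if x = r then tau_e \<tau> r else r)"
    define Q' where "Q' = (edges G - {y}, Lbb q G, Ebb p \<tau> G - {r})"
    have xy: "{x, y} = {r, tau_e \<tau> r}" using x unfolding y_def by auto
    have vM: "P.valid (edges G - {r, tau_e \<tau> r}) (Lbb q G) (Ebb p \<tau> G - {r})"
      using P.valid2[OF vG r] .
    have meq: "meet_s p \<tau> H1 H2 = P.mk (edges G - {r, tau_e \<tau> r}) (Lbb q G) (Ebb p \<tau> G - {r})"
      using P.meet_case2[OF pdG pd1 pd2 r q2 q1x x] .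
    have qH1: "quad p q \<tau> H1 = (edges G - {x}, Lbb q G, Ebb p \<tau> G - {r})" using q1x by (simp add: quad_def)
    have qH2: "quad p q \<tau> H2 = (edges G, Lbb q G, Ebb p \<tau> G - {r})" using q2 by (simp add: quad_def)
    have A: "{quad p q \<tau> H1, Q'} =
                 {(edges G - {r}, Lbb q G, Ebb p \<tau> G - {r}),
                  (edges G - {tau_e \<tau> r}, Lbb q G, Ebb p \<tau> G - {r})}"
      using x unfolding qH1 Q'_def y_def by auto
    have "(edges G - {x}) \<inter> (edges G - {y}) = edges G - {r, tau_e \<tau> r}" using xy by blast
    then have B: "quad p q \<tau> (meet_s p \<tau> H1 H2) = qmeet (quad p q \<tau> H1) Q'"
      unfolding meq P.mk_quad[OF vM] qH1 Q'_def qmeet_def by simp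
    show "\<exists>e\<in>Ebb p \<tau> G. \<exists>Q'.
               quad p q \<tau> H2 = (edges G, Lbb q G, Ebb p \<tau> G - {e}) \<and>
               {quad p q \<tau> H1, Q'} =
                 {(edges G - {e}, Lbb q G, Ebb p \<tau> G - {e}),
                  (edges G - {tau_e \<tau> e}, Lbb q G, Ebb p \<tau> G - {e})} \<and>
               quad p q \<tau> (meet_s p \<tau> H1 H2) = qmeet (quad p q \<tau> H1) Q'"
      using r qH2 A B by blast
  qed
  show ?thesis using part1 part2 by blast
qed


end
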